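(* Let $L>0$, $\delta\in\mathbb{R}$ and $k\in\mathbb{Z}\setminus\{0\}$. For $j=1,2$ let $u^{in}_j\in H^2_{\mathrm{per}}$ have spatial mean zero and satisfy $u^{in}_j(x+\tfrac{L}{k})=u^{in}_j(x)$ for a.e. $x\in\mathbb{R}$, and assume $\|u^{in}_1\|_{L^2}\neq\|u^{in}_2\|_{L^2}$. Let $u_j(x,t)$ be the solution, with $L$-periodic boundary conditions, of the Korteweg–de Vries equation $$u_t+uu_x+\delta^2u_{xxx}=0,\qquad u(x,0)=u^{in}_j(x).$$ Then: (i) $u_j(x+\tfrac{L}{k},t)=u_j(x,t)$ for a.e. $x\in\mathbb{R}$, for $j=1,2$ and all $t\in\mathbb{R}$; (ii) $P_Mu_1(\cdot,t)=P_Mu_2(\cdot,t)$ for every positive integer $M<|k|$ and every $t\in\mathbb{R}$; (iii) $\limsup_{t\to\infty}\|u_1(\cdot,t)-u_2(\cdot,t)\|_{L^2}>0$.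
   Context: $H^2_{\mathrm{per}}$ denotes the closure of the $L$-periodic trigonometric polynomials on $\mathbb{R}$ in the norm $\big(\sum_{j=0}^2\int_0^L|\partial_x^jf|^2dx\big)^{1/2}$; $L^2$ norms are over one period $[0,L]$. For a positive integer $M$, $P_M$ is the orthogonal projection onto the lowest $M$ Fourier modes, i.e. onto the span of $e^{i\frac{2\pi}{L}nx}$ with $|n|\le M$. The KdV equation is understood to be globally well-posed with unique solutions for such data. *)

theory Defs
  imports "HOL-Analysis.Analysis"
begin

definition freq :: "real \<Rightarrow> real" where
  "freq L = 2 * pi / L"

definition trig_poly :: "real \<Rightarrow> (real \<Rightarrow> complex) \<Rightarrow> bool" where
  "trig_poly L p \<longleftrightarrow> (\<exists>(N::nat) (a::int \<Rightarrow> complex).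
     \<forall>x. p x = (\<Sum>n\<in>{-int N..int N}. a n * exp (\<i> * complex_of_real (freq L * of_int n * x))))"

definition vderiv :: "(real \<Rightarrow> complex) \<Rightarrow> real \<Rightarrow> complex" where
  "vderiv g = (\<lambda>x. vector_derivative g (at x))"

definition h2norm :: "real \<Rightarrow> (real \<Rightarrow> complex) \<Rightarrow> real" where
  "h2norm L g = sqrt (\<Sum>j\<le>(2::nat). LINT x:{0..L}|lborel. (cmod ((vderiv ^^ j) g x))\<^sup>2)"

text \<open>p is a sequence of trigonometric polynomials, Cauchy in the H^2 norm,
  converging to f in L^2 over every window of length L (so that it determines
  f almost everywhere on all of R).\<close>
definition h2approx :: "real \<Rightarrow> (real \<Rightarrow> real) \<Rightarrow> (nat \<Rightarrow> real \<Rightarrow> complex) \<Rightarrow> bool" where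
  "h2approx L f p \<longleftrightarrow>
     (\<forall>m. trig_poly L (p m)) \<and>
     (\<forall>e>0. \<exists>N. \<forall>m\<ge>N. \<forall>n\<ge>N. h2norm L (\<lambda>x. p m x - p n x) < e) \<and>
     (\<forall>a::real. (\<lambda>m. \<integral>\<^sup>+ x. ennreal ((cmod (p m x - complex_of_real (f x)))\<^sup>2)
                        * indicator {a..a+L} x \<partial>lborel) \<longlonglongrightarrow> 0)"

text \<open>H^2_per: closure of the trigonometric polynomials in the H^2 norm
  (elements represented by a measurable real function).\<close>
definition H2per :: "real \<Rightarrow> (real \<Rightarrow> real) \<Rightarrow> bool" where
  "H2per L f \<longleftrightarrow> f \<in> borel_measurable borel \<and> (\<exists>p. h2approx L f p)"

definition l2norm :: "real \<Rightarrow> (real \<Rightarrow> real) \<Rightarrow> real" where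
  "l2norm L f = sqrt (LINT x:{0..L}|lborel. (f x)\<^sup>2)"

definition fourier_coeff :: "real \<Rightarrow> (real \<Rightarrow> real) \<Rightarrow> int \<Rightarrow> complex" where
  "fourier_coeff L f n = (LINT x:{0..L}|lborel.
      complex_of_real (f x) * exp (- (\<i> * complex_of_real (freq L * of_int n * x)))) / complex_of_real L"

definition proj :: "real \<Rightarrow> nat \<Rightarrow> (real \<Rightarrow> real) \<Rightarrow> real \<Rightarrow> complex" where
  "proj L M f x = (\<Sum>n\<in>{-int M..int M}. fourier_coeff L f n * exp (\<i> * complex_of_real (freq L * of_int n * x)))"

text \<open>Solutions u(x,t) of u_t + u u_x + delta^2 u_xxx = 0 with L-periodic boundary
  conditions: u(.,t) in H^2_per for all t, locally bounded in H^2 in time, and the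
  equation holds in the sense of distributions in x (tested against smooth
  L-periodic functions), classically in t:
  d/dt int_0^L u phi = int_0^L (u^2/2 phi' + delta^2 u phi''').\<close>
definition kdv_solution :: "real \<Rightarrow> real \<Rightarrow> (real \<Rightarrow> real \<Rightarrow> real) \<Rightarrow> bool" where
  "kdv_solution L \<delta> u \<longleftrightarrow>
     (\<forall>t. H2per L (\<lambda>x. u x t)) \<and>
     (\<forall>T::real. \<exists>B::real. \<forall>t\<in>{-T..T}. \<exists>p. h2approx L (\<lambda>x. u x t) p \<and> (\<forall>m. h2norm L (p m) \<le> B)) \<and>
     (\<forall>\<phi>::real \<Rightarrow> real. (\<forall>k x. ((deriv ^^ k) \<phi>) differentiable (at x)) \<longrightarrow> (\<forall>x. \<phi> (x + L) = \<phi> x) \<longrightarrow>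
        (\<forall>t. ((\<lambda>s. LINT x:{0..L}|lborel. u x s * \<phi> x) has_real_derivative
               (LINT x:{0..L}|lborel. (u x t)\<^sup>2 / 2 * deriv \<phi> x + \<delta>\<^sup>2 * u x t * (deriv ^^ 3) \<phi> x)) (at t)))"

end

theory Submission
  imports Defs
begin
definition ee :: "real \<Rightarrow> int \<Rightarrow> real \<Rightarrow> complex" where
  "ee L n x = exp (\<i> * complex_of_real (freq L * of_int n * x))"

lemma ee_mult: "ee L n x * ee L m x = ee L (n + m) x"
  unfolding ee_def by (simp add: exp_add[symmetric] algebra_simps)

lemma cnj_ee: "cnj (ee L n x) = ee L (-n) x"
  unfolding ee_def by (simp add: exp_cnj)

lemma ee_neg_form: "exp (- (\<i> * complex_of_real (freq L * of_int n * x))) = cnj (ee L n x)"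
  unfolding ee_def by (simp add: exp_cnj)

lemma norm_ee[simp]: "cmod (ee L n x) = 1"
  unfolding ee_def by (simp add: norm_exp_i_times)

lemma ee_0[simp]: "ee L 0 x = 1"
  unfolding ee_def by simp

lemma ee_periodic:
  assumes "L > 0" shows "ee L n (x + L) = ee L n x"
proof -
  have "freq L * of_int n * (x + L) = freq L * of_int n * x + 2 * real_of_int n * pi"
    using assms by (simp add: freq_def field_simps)
  hence "\<i> * complex_of_real (freq L * of_int n * (x + L)) = \<i> * complex_of_real (freq L * of_int n * x) + complex_of_real (2 * real_of_int n * pi) * \<i>"
    by (simp only: of_real_add distrib_left mult.commute)
  hence "ee L n (x + L) = ee L n x * exp (complex_of_real (2 * real_of_int n * pi) * \<i>)"
    unfolding ee_def by (simp only: exp_add)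
  also have "exp (complex_of_real (2 * real_of_int n * pi) * \<i>) = 1"
    by (rule exp_integer_2pi) simp
  finally show ?thesis by simp
qed

lemma ee_deriv:
  "((ee L n) has_vector_derivative (\<i> * complex_of_real (freq L * of_int n)) * ee L n x) (at x within S)"
proof -
  have "((\<lambda>x. exp (x *\<^sub>R (\<i> * complex_of_real (freq L * of_int n)))) has_vector_derivative
        exp (x *\<^sub>R (\<i> * complex_of_real (freq L * of_int n))) * (\<i> * complex_of_real (freq L * of_int n))) (at x within S)"
    by (rule exp_scaleR_has_vector_derivative_right)
  moreover have "\<And>x. x *\<^sub>R (\<i> * complex_of_real (freq L * of_int n)) = \<i> * complex_of_real (freq L * of_int n * x)"
    by (simp add: scaleR_conv_of_real algebra_simps)
  ultimately show ?thesis unfolding ee_def by (simp add: mult.commute)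
qed

lemma continuous_on_ee[continuous_intros]: "continuous_on S (ee L n)"
  unfolding ee_def by (intro continuous_intros)

lemma isCont_ee: "isCont (ee L n) x"
  unfolding ee_def by (intro continuous_intros)

lemma ee_measurable[measurable]: "ee L n \<in> borel_measurable borel"
  by (intro borel_measurable_continuous_onI continuous_on_ee)

lemma int_ee:
  assumes L: "L > 0"
  shows "(LINT x:{0..L}|lborel. ee L n x) = (if n = 0 then complex_of_real L else 0)"
proof (cases "n = 0")
  case True
  then show ?thesis using L by (simp add: set_integral_const scaleR_conv_of_real)
next
  case False
  define c where "c = \<i> * complex_of_real (freq L * of_int n)"
  have c0: "c \<noteq> 0" using False L by (simp add: c_def freq_def)
  have D: "((\<lambda>x. ee L n x / c) has_vector_derivative ee L n x) (at x within {min 0 L..max 0 L})" for x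
  proof -
    have "((\<lambda>x. ee L n x / c) has_vector_derivative (c * ee L n x) / c) (at x within {min 0 L..max 0 L})"
      unfolding c_def by (rule has_vector_derivative_divide[OF ee_deriv])
    thus ?thesis using c0 by simp
  qed
  have "(LBINT x=0..L. ee L n x) = ee L n L / c - ee L n 0 / c"
    using interval_integral_FTC_finite[of 0 L "ee L n" "\<lambda>x. ee L n x / c", OF continuous_on_ee D] by (simp add: zero_ereal_def)
  also have "ee L n L = ee L n 0" using ee_periodic[OF L, of n 0] by simp
  finally show ?thesis using False L interval_integral_Icc[of 0 L "ee L n"] by (simp add: zero_ereal_def)
qed

definition sqi :: "real set \<Rightarrow> (real \<Rightarrow> complex) \<Rightarrow> bool" where
  "sqi A g \<longleftrightarrow> g \<in> borel_measurable borel \<and> set_integrable lborel A (\<lambda>x. (cmod (g x))\<^sup>2)"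

lemma sbm: fixes g :: "real \<Rightarrow> 'a::{banach, second_countable_topology}" assumes "g \<in> borel_measurable borel" "A \<in> sets borel"
  shows "set_borel_measurable lborel A g"
proof -
  have "(\<lambda>x. indicator A x *\<^sub>R g x) \<in> borel_measurable borel"
  proof -
    have [measurable]: "A \<in> sets borel" "g \<in> borel_measurable borel" using assms by auto
    show ?thesis by measurable
  qed
  thus ?thesis unfolding set_borel_measurable_def by simp
qed

lemma sqi_meas: "sqi A g \<Longrightarrow> g \<in> borel_measurable borel" by (simp add: sqi_def)

lemma set_integrable_prod:
  assumes g: "sqi A g" and h: "sqi A h" and A: "A \<in> sets borel"
  shows "set_integrable lborel A (\<lambda>x. g x * h x)"
proof (rule set_integrable_bound[where f="\<lambda>x. (cmod (g x))\<^sup>2 + (cmod (h x))\<^sup>2"])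
  show "set_integrable lborel A (\<lambda>x. (cmod (g x))\<^sup>2 + (cmod (h x))\<^sup>2)"
    using g h by (intro set_integral_add) (auto simp: sqi_def)
  show "set_borel_measurable lborel A (\<lambda>x. g x * h x)"
    using g h A by (intro sbm) (auto simp: sqi_def)
  show "AE x\<in>A in lborel. norm (g x * h x) \<le> norm ((cmod (g x))\<^sup>2 + (cmod (h x))\<^sup>2)"
  proof (rule AE_I2, rule impI)
    fix x
    have "cmod (g x) * cmod (h x) \<le> (cmod (g x))\<^sup>2 + (cmod (h x))\<^sup>2"
    proof -
      have "2 * (cmod (g x) * cmod (h x)) \<le> (cmod (g x))\<^sup>2 + (cmod (h x))\<^sup>2"
        using sum_squares_bound[of "cmod (g x)" "cmod (h x)"] by (simp add: mult.assoc)
      moreover have "0 \<le> cmod (g x) * cmod (h x)" by simp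
      ultimately show ?thesis by linarith
    qed
    thus "norm (g x * h x) \<le> norm ((cmod (g x))\<^sup>2 + (cmod (h x))\<^sup>2)"
      by (simp add: norm_mult)
  qed
qed

lemma sqi_cont:
  assumes "continuous_on UNIV g" shows "sqi {a..b} g"
  unfolding sqi_def
proof
  show "g \<in> borel_measurable borel" using assms by (rule borel_measurable_continuous_onI)
  show "set_integrable lborel {a..b} (\<lambda>x. (cmod (g x))\<^sup>2)"
    by (rule borel_integrable_atLeastAtMost') (intro continuous_intros continuous_on_subset[OF assms], auto)
qed

lemma sqi_const: "sqi {a..b} (\<lambda>x. c)"
  by (rule sqi_cont) (intro continuous_intros)

lemma sqi_add:
  assumes g: "sqi A g" and h: "sqi A h" and A: "A \<in> sets borel"
  shows "sqi A (\<lambda>x. g x + h x)"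
  unfolding sqi_def
proof
  show "(\<lambda>x. g x + h x) \<in> borel_measurable borel" using g h by (auto simp: sqi_def)
  show "set_integrable lborel A (\<lambda>x. (cmod (g x + h x))\<^sup>2)"
  proof (rule set_integrable_bound[where f="\<lambda>x. 2 * (cmod (g x))\<^sup>2 + 2 * (cmod (h x))\<^sup>2"])
    show "set_integrable lborel A (\<lambda>x. 2 * (cmod (g x))\<^sup>2 + 2 * (cmod (h x))\<^sup>2)"
      using g h by (intro set_integral_add set_integrable_mult_right) (auto simp: sqi_def)
    show "set_borel_measurable lborel A (\<lambda>x. (cmod (g x + h x))\<^sup>2)"
      using g h A by (intro sbm) (auto simp: sqi_def)
    show "AE x\<in>A in lborel. norm ((cmod (g x + h x))\<^sup>2) \<le> norm (2 * (cmod (g x))\<^sup>2 + 2 * (cmod (h x))\<^sup>2)"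
    proof (rule AE_I2, rule impI)
      fix x
      have "(cmod (g x + h x))\<^sup>2 \<le> (cmod (g x) + cmod (h x))\<^sup>2"
        by (simp add: norm_triangle_ineq power_mono)
      also have "\<dots> \<le> 2 * (cmod (g x))\<^sup>2 + 2 * (cmod (h x))\<^sup>2"
        using sum_squares_bound[of "cmod (g x)" "cmod (h x)"] by (simp add: power2_sum)
      finally show "norm ((cmod (g x + h x))\<^sup>2) \<le> norm (2 * (cmod (g x))\<^sup>2 + 2 * (cmod (h x))\<^sup>2)"
        by simp
    qed
  qed
qed

lemma sqi_mult_bounded:
  assumes g: "sqi A g" and h: "h \<in> borel_measurable borel" and C: "\<And>x. cmod (h x) \<le> C" and A: "A \<in> sets borel"
  shows "sqi A (\<lambda>x. h x * g x)"
  unfolding sqi_def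
proof
  show "(\<lambda>x. h x * g x) \<in> borel_measurable borel" using g h by (auto simp: sqi_def)
  show "set_integrable lborel A (\<lambda>x. (cmod (h x * g x))\<^sup>2)"
  proof (rule set_integrable_bound[where f="\<lambda>x. C\<^sup>2 * (cmod (g x))\<^sup>2"])
    show "set_integrable lborel A (\<lambda>x. C\<^sup>2 * (cmod (g x))\<^sup>2)"
      using g by (intro set_integrable_mult_right) (auto simp: sqi_def)
    show "set_borel_measurable lborel A (\<lambda>x. (cmod (h x * g x))\<^sup>2)"
      using g h A by (intro sbm) (auto simp: sqi_def)
    show "AE x\<in>A in lborel. norm ((cmod (h x * g x))\<^sup>2) \<le> norm (C\<^sup>2 * (cmod (g x))\<^sup>2)"
    proof (rule AE_I2, rule impI)
      fix x
      have "(cmod (h x * g x))\<^sup>2 = (cmod (h x))\<^sup>2 * (cmod (g x))\<^sup>2" by (simp add: norm_mult power_mult_distrib)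
      also have "\<dots> \<le> C\<^sup>2 * (cmod (g x))\<^sup>2"
        by (intro mult_right_mono power_mono C) auto
      finally show "norm ((cmod (h x * g x))\<^sup>2) \<le> norm (C\<^sup>2 * (cmod (g x))\<^sup>2)" by simp
    qed
  qed
qed

lemma sqi_cmult: "sqi A g \<Longrightarrow> A \<in> sets borel \<Longrightarrow> sqi A (\<lambda>x. c * g x)"
  using sqi_mult_bounded[of A g "\<lambda>_. c" "cmod c"] by auto

lemma sqi_uminus: "sqi A g \<Longrightarrow> sqi A (\<lambda>x. - g x)"
  by (simp add: sqi_def)

lemma sqi_diff: "sqi A g \<Longrightarrow> sqi A h \<Longrightarrow> A \<in> sets borel \<Longrightarrow> sqi A (\<lambda>x. g x - h x)"
  using sqi_add[of A g "\<lambda>x. - h x"] sqi_uminus[of A h] by simp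

lemma sqi_cnj: assumes "sqi A g" shows "sqi A (\<lambda>x. cnj (g x))"
proof -
  have g: "g \<in> borel_measurable borel" using assms by (simp add: sqi_def)
  have c: "cnj \<in> borel_measurable borel"
    by (intro borel_measurable_continuous_onI linear_continuous_on bounded_linear_cnj)
  have "(\<lambda>x. cnj (g x)) \<in> borel_measurable borel" using measurable_compose[OF g c] by simp
  thus ?thesis using assms by (simp add: sqi_def)
qed

lemma sqi_of_real: "sqi A (\<lambda>x. complex_of_real (f x)) \<longleftrightarrow> f \<in> borel_measurable borel \<and> set_integrable lborel A (\<lambda>x. (f x)\<^sup>2)"
proof -
  have "(\<lambda>x. complex_of_real (f x)) \<in> borel_measurable borel \<longleftrightarrow> f \<in> borel_measurable borel"
  proof
    assume [measurable]: "(\<lambda>x. complex_of_real (f x)) \<in> borel_measurable borel"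
    have "(\<lambda>x. Re (complex_of_real (f x))) \<in> borel_measurable borel" by measurable
    thus "f \<in> borel_measurable borel" by simp
  next
    assume [measurable]: "f \<in> borel_measurable borel"
    show "(\<lambda>x. complex_of_real (f x)) \<in> borel_measurable borel" by measurable
  qed
  thus ?thesis by (simp add: sqi_def)
qed

lemma set_integrable_sqi:
  assumes "sqi {a..b} g" shows "set_integrable lborel {a..b} g"
  using set_integrable_prod[OF assms sqi_const[of a b 1]] by simp

lemma set_integrable_sq:
  assumes "sqi A g" shows "set_integrable lborel A (\<lambda>x. (cmod (g x))\<^sup>2)"
  using assms by (simp add: sqi_def)

lemma set_integral_sum:
  fixes f :: "'i \<Rightarrow> real \<Rightarrow> 'a::{banach, second_countable_topology}"
  assumes "finite I" "\<And>i. i \<in> I \<Longrightarrow> set_integrable M A (f i)"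
  shows "(LINT x:A|M. (\<Sum>i\<in>I. f i x)) = (\<Sum>i\<in>I. LINT x:A|M. f i x)"
proof -
  have e: "(\<lambda>x. indicator A x *\<^sub>R (\<Sum>i\<in>I. f i x)) = (\<lambda>x. \<Sum>i\<in>I. indicator A x *\<^sub>R f i x)"
    by (simp only: scaleR_sum_right)
  show ?thesis using assms unfolding set_lebesgue_integral_def set_integrable_def e
    by (intro Bochner_Integration.integral_sum) auto
qed

lemma set_integrable_sum':
  fixes f :: "'i \<Rightarrow> real \<Rightarrow> 'a::{banach, second_countable_topology}"
  assumes "finite I" "\<And>i. i \<in> I \<Longrightarrow> set_integrable M A (f i)"
  shows "set_integrable M A (\<lambda>x. \<Sum>i\<in>I. f i x)"
proof -
  have e: "(\<lambda>x. indicator A x *\<^sub>R (\<Sum>i\<in>I. f i x)) = (\<lambda>x. \<Sum>i\<in>I. indicator A x *\<^sub>R f i x)"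
    by (simp only: scaleR_sum_right)
  show ?thesis using assms unfolding set_integrable_def e
    by (intro Bochner_Integration.integrable_sum) auto
qed

lemma set_integral_nonneg':
  fixes f :: "real \<Rightarrow> real"
  assumes "\<And>x. x \<in> A \<Longrightarrow> 0 \<le> f x"
  shows "0 \<le> (LINT x:A|M. f x)"
  unfolding set_lebesgue_integral_def
  by (rule integral_nonneg_AE) (auto simp: assms indicator_def)

definition tp :: "real \<Rightarrow> nat \<Rightarrow> (int \<Rightarrow> complex) \<Rightarrow> real \<Rightarrow> complex" where
  "tp L N c x = (\<Sum>n\<in>{-int N..int N}. c n * ee L n x)"

definition cf :: "real \<Rightarrow> (real \<Rightarrow> complex) \<Rightarrow> int \<Rightarrow> complex" where
  "cf L g n = (LINT x:{0..L}|lborel. g x * cnj (ee L n x)) / complex_of_real L"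

lemma fourier_coeff_cf: "fourier_coeff L f n = cf L (\<lambda>x. complex_of_real (f x)) n"
  unfolding fourier_coeff_def cf_def ee_neg_form ..

lemma trig_poly_tp: "trig_poly L p \<Longrightarrow> \<exists>N c. p = tp L N c"
  unfolding trig_poly_def tp_def ee_def by blast

lemma tp_trig_poly: "trig_poly L (tp L N c)"
  unfolding trig_poly_def tp_def ee_def by blast

lemma continuous_on_tp: "continuous_on S (tp L N c)"
  unfolding tp_def by (intro continuous_intros)

lemma sqi_tp: "sqi {a..b} (tp L N c)"
  by (rule sqi_cont, rule continuous_on_tp)

lemma sqi_ee: "sqi {a..b} (ee L n)"
  by (rule sqi_cont, rule continuous_on_ee)

lemma sqi_cnj_ee: "sqi {a..b} (\<lambda>x. cnj (ee L n x))"
  by (rule sqi_cnj, rule sqi_ee)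

lemma tp_extend:
  assumes "N \<le> N'"
  shows "tp L N c = tp L N' (\<lambda>n. if \<bar>n\<bar> \<le> int N then c n else 0)"
proof
  fix x
  have sub: "{-int N..int N} \<subseteq> {-int N'..int N'}" using assms by auto
  have "tp L N' (\<lambda>n. if \<bar>n\<bar> \<le> int N then c n else 0) x
      = (\<Sum>n\<in>{-int N'..int N'}. (if n \<in> {-int N..int N} then c n * ee L n x else 0))"
    unfolding tp_def by (intro sum.cong) auto
  also have "\<dots> = (\<Sum>n\<in>{-int N..int N}. c n * ee L n x)"
    using sum.inter_restrict[of "{-int N'..int N'}" "\<lambda>n. c n * ee L n x" "{-int N..int N}"] sub
    by (simp add: Int_absorb1)
  finally show "tp L N c x = tp L N' (\<lambda>n. if \<bar>n\<bar> \<le> int N then c n else 0) x"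
    unfolding tp_def by simp
qed

lemma orth:
  assumes L: "L > 0"
  shows "(LINT x:{0..L}|lborel. ee L n x * cnj (ee L m x)) = (if n = m then complex_of_real L else 0)"
  using int_ee[OF L, of "n - m"] by (simp add: cnj_ee ee_mult)

lemma int_g_cnj_tp:
  assumes L: "L > 0" and g: "sqi {0..L} g"
  shows "(LINT x:{0..L}|lborel. g x * cnj (tp L N c x)) = complex_of_real L * (\<Sum>n\<in>{-int N..int N}. cf L g n * cnj (c n))"
proof -
  have "(LINT x:{0..L}|lborel. g x * cnj (tp L N c x))
      = (LINT x:{0..L}|lborel. (\<Sum>n\<in>{-int N..int N}. cnj (c n) * (g x * cnj (ee L n x))))"
    unfolding tp_def by (simp add: sum_distrib_left algebra_simps)
  also have "\<dots> = (\<Sum>n\<in>{-int N..int N}. LINT x:{0..L}|lborel. cnj (c n) * (g x * cnj (ee L n x)))"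
    by (intro set_integral_sum set_integrable_mult_right set_integrable_prod g sqi_cnj_ee) auto
  also have "\<dots> = (\<Sum>n\<in>{-int N..int N}. cnj (c n) * (complex_of_real L * cf L g n))"
    using L by (simp add: cf_def set_integral_mult_right)
  finally show ?thesis by (simp add: sum_distrib_left algebra_simps)
qed

lemma cf_tp:
  assumes L: "L > 0"
  shows "cf L (tp L N c) m = (if \<bar>m\<bar> \<le> int N then c m else 0)"
proof -
  have "(LINT x:{0..L}|lborel. tp L N c x * cnj (ee L m x))
      = (LINT x:{0..L}|lborel. (\<Sum>n\<in>{-int N..int N}. c n * (ee L n x * cnj (ee L m x))))"
    unfolding tp_def sum_distrib_right by (simp only: mult.assoc)
  also have "\<dots> = (\<Sum>n\<in>{-int N..int N}. LINT x:{0..L}|lborel. c n * (ee L n x * cnj (ee L m x)))"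
    by (intro set_integral_sum set_integrable_mult_right set_integrable_prod sqi_ee sqi_cnj_ee) auto
  also have "\<dots> = (\<Sum>n\<in>{-int N..int N}. c n * (if n = m then complex_of_real L else 0))"
    using L by (simp add: set_integral_mult_right orth)
  also have "\<dots> = (if \<bar>m\<bar> \<le> int N then c m * complex_of_real L else 0)"
    by (simp add: if_distrib[of "\<lambda>z. c _ * z"] sum.delta' abs_le_iff cong: if_cong)
  finally show ?thesis using L by (simp add: cf_def)
qed

lemma cnorm_sq: "(complex_of_real (cmod z))\<^sup>2 = z * cnj z"
  by (simp only: of_real_power[symmetric] complex_norm_square)

lemma int_sq_complex:
  "complex_of_real (LINT x:A|lborel. (cmod (g x))\<^sup>2) = (LINT x:A|lborel. g x * cnj (g x))"
  by (simp only: set_integral_complex_of_real[symmetric] complex_norm_square)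

lemma int_tp_sq:
  assumes L: "L > 0"
  shows "(LINT x:{0..L}|lborel. (cmod (tp L N c x))\<^sup>2) = L * (\<Sum>n\<in>{-int N..int N}. (cmod (c n))\<^sup>2)"
proof -
  have "complex_of_real (LINT x:{0..L}|lborel. (cmod (tp L N c x))\<^sup>2) = complex_of_real L * (\<Sum>n\<in>{-int N..int N}. cf L (tp L N c) n * cnj (c n))"
    unfolding int_sq_complex by (rule int_g_cnj_tp[OF L sqi_tp])
  also have "\<dots> = complex_of_real L * (\<Sum>n\<in>{-int N..int N}. complex_of_real ((cmod (c n))\<^sup>2))"
    using L by (intro arg_cong[where f="\<lambda>s. _ * s"] sum.cong) (auto simp: cf_tp cnorm_sq simp del: complex_mult_cnj)
  also have "\<dots> = complex_of_real (L * (\<Sum>n\<in>{-int N..int N}. (cmod (c n))\<^sup>2))" by simp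
  finally show ?thesis by (simp only: of_real_eq_iff)
qed

definition dc :: "real \<Rightarrow> (int \<Rightarrow> complex) \<Rightarrow> int \<Rightarrow> complex" where
  "dc L c n = \<i> * complex_of_real (freq L * of_int n) * c n"

lemma dc_eq: "dc L c = (\<lambda>n. \<i> * complex_of_real (freq L * of_int n) * c n)"
  by (rule ext) (simp add: dc_def)

lemma tp_has_deriv:
  "(tp L N c has_vector_derivative tp L N (dc L c) x) (at x within S)"
proof -
  have "((\<lambda>x. \<Sum>n\<in>{-int N..int N}. c n * ee L n x) has_vector_derivative
        (\<Sum>n\<in>{-int N..int N}. c n * (\<i> * complex_of_real (freq L * of_int n) * ee L n x))) (at x within S)"
    by (intro has_vector_derivative_sum has_vector_derivative_mult_right ee_deriv)
  moreover have "(\<Sum>n\<in>{-int N..int N}. c n * (\<i> * complex_of_real (freq L * of_int n) * ee L n x)) = tp L N (dc L c) x"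
    unfolding tp_def dc_def by (simp add: algebra_simps)
  ultimately show ?thesis unfolding tp_def[abs_def] by simp
qed

lemma vderiv_tp: "vderiv (tp L N c) = tp L N (dc L c)"
  unfolding vderiv_def by (rule ext, rule vector_derivative_at, rule tp_has_deriv)

lemma vderiv_pow_tp: "(vderiv ^^ j) (tp L N c) = tp L N (\<lambda>n. (\<i> * complex_of_real (freq L * of_int n)) ^ j * c n)"
proof (induction j)
  case 0 then show ?case by simp
next
  case (Suc j)
  show ?case by (simp add: Suc vderiv_tp dc_eq) (simp add: algebra_simps)
qed

lemma h2norm_tp:
  assumes L: "L > 0"
  shows "h2norm L (tp L N c) = sqrt (\<Sum>j\<le>(2::nat). L * (\<Sum>n\<in>{-int N..int N}. (cmod ((\<i> * complex_of_real (freq L * of_int n)) ^ j * c n))\<^sup>2))"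
  unfolding h2norm_def vderiv_pow_tp int_tp_sq[OF L] ..

lemma h2norm_tp_ge:
  assumes L: "L > 0"
  shows "L * (\<Sum>n\<in>{-int N..int N}. (cmod ((\<i> * complex_of_real (freq L * of_int n)) ^ 2 * c n))\<^sup>2) \<le> (h2norm L (tp L N c))\<^sup>2"
    and "L * (\<Sum>n\<in>{-int N..int N}. (cmod (c n))\<^sup>2) \<le> (h2norm L (tp L N c))\<^sup>2"
proof -
  define T where "T j = L * (\<Sum>n\<in>{-int N..int N}. (cmod ((\<i> * complex_of_real (freq L * of_int n)) ^ j * c n))\<^sup>2)" for j :: nat
  have T0: "0 \<le> T j" for j unfolding T_def using L by (intro mult_nonneg_nonneg sum_nonneg) auto
  have sq: "(h2norm L (tp L N c))\<^sup>2 = (\<Sum>j\<le>(2::nat). T j)"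
    unfolding h2norm_tp[OF L] T_def[symmetric] using T0 by (simp add: sum_nonneg)
  have e: "(\<Sum>j\<le>(2::nat). T j) = T 0 + T 1 + T 2" by (simp add: numeral_2_eq_2)
  show "L * (\<Sum>n\<in>{-int N..int N}. (cmod ((\<i> * complex_of_real (freq L * of_int n)) ^ 2 * c n))\<^sup>2) \<le> (h2norm L (tp L N c))\<^sup>2"
    using T0[of 0] T0[of 1] unfolding sq e by (simp add: T_def)
  show "L * (\<Sum>n\<in>{-int N..int N}. (cmod (c n))\<^sup>2) \<le> (h2norm L (tp L N c))\<^sup>2"
    using T0[of 2] T0[of 1] unfolding sq e by (simp add: T_def)
qed

lemma tp_shift: "tp L N c (x + s) = tp L N (\<lambda>n. c n * ee L n s) x"
  unfolding tp_def by (intro sum.cong refl) (simp add: ee_def algebra_simps exp_add[symmetric] distrib_left)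

lemma set_integral_cnj:
  "(LINT x:A|M. cnj (f x)) = cnj (LINT x:A|M. f x)"
proof -
  have "(\<lambda>x. indicator A x *\<^sub>R cnj (f x)) = (\<lambda>x. cnj (indicator A x *\<^sub>R f x))"
    by (simp add: scaleR_conv_of_real)
  thus ?thesis unfolding set_lebesgue_integral_def by (simp only: Bochner_Integration.integral_cnj)
qed

lemma best_approx:
  assumes L: "L > 0" and g: "sqi {0..L} g"
  shows "(LINT x:{0..L}|lborel. (cmod (g x - tp L N c x))\<^sup>2)
       = (LINT x:{0..L}|lborel. (cmod (g x))\<^sup>2) - L * (\<Sum>n\<in>{-int N..int N}. (cmod (cf L g n))\<^sup>2)
         + L * (\<Sum>n\<in>{-int N..int N}. (cmod (cf L g n - c n))\<^sup>2)"
proof -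
  let ?h = "tp L N c"
  let ?I = "{-int N..int N}"
  have h: "sqi {0..L} ?h" by (rule sqi_tp)
  have i1: "set_integrable lborel {0..L} (\<lambda>x. g x * cnj (g x))" by (intro set_integrable_prod g sqi_cnj) auto
  have i2: "set_integrable lborel {0..L} (\<lambda>x. g x * cnj (?h x))" by (intro set_integrable_prod g h sqi_cnj) auto
  have i3: "set_integrable lborel {0..L} (\<lambda>x. ?h x * cnj (g x))" by (intro set_integrable_prod g h sqi_cnj) auto
  have i4: "set_integrable lborel {0..L} (\<lambda>x. ?h x * cnj (?h x))" by (intro set_integrable_prod h sqi_cnj) auto
  have "complex_of_real (LINT x:{0..L}|lborel. (cmod (g x - ?h x))\<^sup>2)
      = (LINT x:{0..L}|lborel. (g x * cnj (g x) - g x * cnj (?h x)) - (?h x * cnj (g x) - ?h x * cnj (?h x)))"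
    unfolding int_sq_complex by (simp add: algebra_simps)
  also have "\<dots> = ((LINT x:{0..L}|lborel. g x * cnj (g x)) - (LINT x:{0..L}|lborel. g x * cnj (?h x)))
                 - ((LINT x:{0..L}|lborel. ?h x * cnj (g x)) - (LINT x:{0..L}|lborel. ?h x * cnj (?h x)))"
    using i1 i2 i3 i4 by (simp add: set_integral_diff)
  also have "(LINT x:{0..L}|lborel. ?h x * cnj (g x)) = cnj (LINT x:{0..L}|lborel. g x * cnj (?h x))"
    by (simp add: set_integral_cnj[symmetric] mult.commute)
  also have "(LINT x:{0..L}|lborel. g x * cnj (?h x)) = complex_of_real L * (\<Sum>n\<in>?I. cf L g n * cnj (c n))"
    by (rule int_g_cnj_tp[OF L g])
  also have "(LINT x:{0..L}|lborel. ?h x * cnj (?h x)) = complex_of_real (L * (\<Sum>n\<in>?I. (cmod (c n))\<^sup>2))"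
    by (simp only: int_sq_complex[symmetric] int_tp_sq[OF L])
  also have "(LINT x:{0..L}|lborel. g x * cnj (g x)) = complex_of_real (LINT x:{0..L}|lborel. (cmod (g x))\<^sup>2)"
    by (simp only: int_sq_complex)
  finally have "complex_of_real (LINT x:{0..L}|lborel. (cmod (g x - ?h x))\<^sup>2)
     = complex_of_real (LINT x:{0..L}|lborel. (cmod (g x))\<^sup>2) - complex_of_real L * (\<Sum>n\<in>?I. cf L g n * cnj (c n))
       - (cnj (complex_of_real L * (\<Sum>n\<in>?I. cf L g n * cnj (c n))) - complex_of_real (L * (\<Sum>n\<in>?I. (cmod (c n))\<^sup>2)))"
    by simp
  also have "\<dots> = complex_of_real ((LINT x:{0..L}|lborel. (cmod (g x))\<^sup>2) - L * (\<Sum>n\<in>?I. (cmod (cf L g n))\<^sup>2)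
         + L * (\<Sum>n\<in>?I. (cmod (cf L g n - c n))\<^sup>2))"
  proof -
    have "\<And>n. complex_of_real ((cmod (cf L g n - c n))\<^sup>2) = complex_of_real ((cmod (cf L g n))\<^sup>2) - cf L g n * cnj (c n) - cnj (cf L g n * cnj (c n)) + complex_of_real ((cmod (c n))\<^sup>2)"
      by (simp only: complex_norm_square) (simp add: algebra_simps)
    hence e: "(\<Sum>n\<in>?I. complex_of_real ((cmod (cf L g n - c n))\<^sup>2)) = (\<Sum>n\<in>?I. complex_of_real ((cmod (cf L g n))\<^sup>2)) - (\<Sum>n\<in>?I. cf L g n * cnj (c n)) - (\<Sum>n\<in>?I. cnj (cf L g n * cnj (c n))) + (\<Sum>n\<in>?I. complex_of_real ((cmod (c n))\<^sup>2))"
      by (simp add: sum.distrib sum_subtractf)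
    show ?thesis
      by (simp only: of_real_add of_real_diff of_real_mult of_real_sum e cnj_sum complex_cnj_mult complex_cnj_complex_of_real)
         (simp add: algebra_simps)
  qed
  finally show ?thesis by (simp only: of_real_eq_iff)
qed

lemma bessel:
  assumes L: "L > 0" and g: "sqi {0..L} g"
  shows "L * (\<Sum>n\<in>{-int N..int N}. (cmod (cf L g n))\<^sup>2) \<le> (LINT x:{0..L}|lborel. (cmod (g x))\<^sup>2)"
  using best_approx[OF L g, of N "cf L g"] set_integral_nonneg'[of "{0..L}" "\<lambda>x. (cmod (g x - tp L N (cf L g) x))\<^sup>2" lborel]
  by simp

lemma tail_eq:
  assumes L: "L > 0" and g: "sqi {0..L} g"
  shows "(LINT x:{0..L}|lborel. (cmod (g x - tp L N (cf L g) x))\<^sup>2)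
       = (LINT x:{0..L}|lborel. (cmod (g x))\<^sup>2) - L * (\<Sum>n\<in>{-int N..int N}. (cmod (cf L g n))\<^sup>2)"
  using best_approx[OF L g, of N "cf L g"] by simp

lemma best_le:
  assumes L: "L > 0" and g: "sqi {0..L} g"
  shows "(LINT x:{0..L}|lborel. (cmod (g x))\<^sup>2) - L * (\<Sum>n\<in>{-int N..int N}. (cmod (cf L g n))\<^sup>2)
       \<le> (LINT x:{0..L}|lborel. (cmod (g x - tp L N c x))\<^sup>2)"
  using best_approx[OF L g, of N c] L by (simp add: sum_nonneg)

lemma nn_to_lint:
  fixes h :: "nat \<Rightarrow> real \<Rightarrow> real"
  assumes meas: "\<And>m. h m \<in> borel_measurable borel" and nn: "\<And>m x. 0 \<le> h m x" and A: "A \<in> sets borel"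
    and lim: "(\<lambda>m. \<integral>\<^sup>+ x. ennreal (h m x) * indicator A x \<partial>lborel) \<longlonglongrightarrow> 0"
  shows "eventually (\<lambda>m. set_integrable lborel A (h m)) sequentially"
    and "(\<lambda>m. LINT x:A|lborel. h m x) \<longlonglongrightarrow> 0"
proof -
  have ptw: "\<And>m x. ennreal (norm (indicator A x *\<^sub>R h m x)) = ennreal (h m x) * indicator A x"
    using nn by (auto simp: indicator_def)
  have ptw2: "\<And>m x. ennreal (indicator A x *\<^sub>R h m x) = ennreal (h m x) * indicator A x"
    using nn by (auto simp: indicator_def)
  have mA: "\<And>m. (\<lambda>x. indicator A x *\<^sub>R h m x) \<in> borel_measurable lborel"
  proof -
    fix m
    have [measurable]: "A \<in> sets borel" "h m \<in> borel_measurable borel" using A meas by auto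
    have "(\<lambda>x. indicator A x *\<^sub>R h m x) \<in> borel_measurable borel" by measurable
    thus "(\<lambda>x. indicator A x *\<^sub>R h m x) \<in> borel_measurable lborel" by simp
  qed
  have ev: "eventually (\<lambda>m. (\<integral>\<^sup>+ x. ennreal (h m x) * indicator A x \<partial>lborel) < 1) sequentially"
    using order_tendstoD(2)[OF lim, of 1] by simp
  have int: "set_integrable lborel A (h m)" if "(\<integral>\<^sup>+ x. ennreal (h m x) * indicator A x \<partial>lborel) < 1" for m
    unfolding set_integrable_def
  proof (rule integrableI_bounded[OF mA])
    have "(\<integral>\<^sup>+ x. ennreal (norm (indicator A x *\<^sub>R h m x)) \<partial>lborel) = (\<integral>\<^sup>+ x. ennreal (h m x) * indicator A x \<partial>lborel)"
      by (simp only: ptw)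
    also have "\<dots> < 1" by (rule that)
    finally have "(\<integral>\<^sup>+ x. ennreal (norm (indicator A x *\<^sub>R h m x)) \<partial>lborel) < 1" .
    then show "(\<integral>\<^sup>+ x. ennreal (norm (indicator A x *\<^sub>R h m x)) \<partial>lborel) < \<infinity>"
      unfolding infinity_ennreal_def using ennreal_one_less_top by (rule less_trans)
  qed
  show "eventually (\<lambda>m. set_integrable lborel A (h m)) sequentially"
    using ev by (rule eventually_mono) (rule int)
  have eq: "eventually (\<lambda>m. ennreal (LINT x:A|lborel. h m x) = (\<integral>\<^sup>+ x. ennreal (h m x) * indicator A x \<partial>lborel)) sequentially"
    using ev
  proof (rule eventually_mono)
    fix m assume "(\<integral>\<^sup>+ x. ennreal (h m x) * indicator A x \<partial>lborel) < 1"
    hence i: "set_integrable lborel A (h m)" by (rule int)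
    show "ennreal (LINT x:A|lborel. h m x) = (\<integral>\<^sup>+ x. ennreal (h m x) * indicator A x \<partial>lborel)"
    proof -
      have a: "(\<integral>\<^sup>+ x. ennreal (indicator A x *\<^sub>R h m x) \<partial>lborel) = ennreal (LINT x|lborel. indicator A x *\<^sub>R h m x)"
        by (rule nn_integral_eq_integral[OF i[unfolded set_integrable_def]]) (auto intro!: AE_I2 simp: nn)
      have b: "(\<integral>\<^sup>+ x. ennreal (indicator A x *\<^sub>R h m x) \<partial>lborel) = (\<integral>\<^sup>+ x. ennreal (h m x) * indicator A x \<partial>lborel)"
        by (simp only: ptw2)
      show ?thesis unfolding set_lebesgue_integral_def by (rule trans[OF a[symmetric] b])
    qed
  qed
  have "(\<lambda>m. ennreal (LINT x:A|lborel. h m x)) \<longlonglongrightarrow> 0"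
    using lim eq by (simp add: tendsto_cong)
  thus "(\<lambda>m. LINT x:A|lborel. h m x) \<longlonglongrightarrow> 0"
    by (subst (asm) ennreal_tendsto_0_iff) (auto intro: set_integral_nonneg' nn)
qed


lemma trig_poly_cont: "trig_poly L q \<Longrightarrow> continuous_on UNIV q"
  using trig_poly_tp continuous_on_tp by metis

lemma trig_poly_meas: "trig_poly L q \<Longrightarrow> q \<in> borel_measurable borel"
  by (rule borel_measurable_continuous_onI, rule trig_poly_cont)

lemma h2approx_window:
  assumes h: "h2approx L f p" and fm: "f \<in> borel_measurable borel"
  shows "eventually (\<lambda>m. set_integrable lborel {a..a+L} (\<lambda>x. (cmod (p m x - complex_of_real (f x)))\<^sup>2)) sequentially"
    and "(\<lambda>m. LINT x:{a..a+L}|lborel. (cmod (p m x - complex_of_real (f x)))\<^sup>2) \<longlonglongrightarrow> 0"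
proof -
  have tp: "\<And>m. trig_poly L (p m)" using h by (simp add: h2approx_def)
  have lim: "(\<lambda>m. \<integral>\<^sup>+ x. ennreal ((cmod (p m x - complex_of_real (f x)))\<^sup>2) * indicator {a..a+L} x \<partial>lborel) \<longlonglongrightarrow> 0"
    using h by (simp add: h2approx_def)
  have meas: "(\<lambda>x. (cmod (p m x - complex_of_real (f x)))\<^sup>2) \<in> borel_measurable borel" for m
  proof -
    have [measurable]: "p m \<in> borel_measurable borel" "f \<in> borel_measurable borel"
      using trig_poly_meas[OF tp] fm by auto
    show ?thesis by measurable
  qed
  show "eventually (\<lambda>m. set_integrable lborel {a..a+L} (\<lambda>x. (cmod (p m x - complex_of_real (f x)))\<^sup>2)) sequentially"
    by (rule nn_to_lint(1)[OF meas _ _ lim]) auto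
  show "(\<lambda>m. LINT x:{a..a+L}|lborel. (cmod (p m x - complex_of_real (f x)))\<^sup>2) \<longlonglongrightarrow> 0"
    by (rule nn_to_lint(2)[OF meas _ _ lim]) auto
qed

lemma h2_sqi:
  assumes h: "h2approx L f p" and fm: "f \<in> borel_measurable borel"
  shows "sqi {a..a+L} (\<lambda>x. complex_of_real (f x))"
proof -
  have tp: "\<And>m. trig_poly L (p m)" using h by (simp add: h2approx_def)
  obtain m where m: "set_integrable lborel {a..a+L} (\<lambda>x. (cmod (p m x - complex_of_real (f x)))\<^sup>2)"
    using eventually_happens'[OF _ h2approx_window(1)[OF h fm, of a]] by auto
  have s1: "sqi {a..a+L} (\<lambda>x. p m x - complex_of_real (f x))"
  proof -
    have [measurable]: "p m \<in> borel_measurable borel" "f \<in> borel_measurable borel"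
      using trig_poly_meas[OF tp] fm by auto
    have "(\<lambda>x. p m x - complex_of_real (f x)) \<in> borel_measurable borel" by measurable
    thus ?thesis using m by (simp add: sqi_def)
  qed
  have s2: "sqi {a..a+L} (p m)" by (rule sqi_cont, rule trig_poly_cont[OF tp])
  have "sqi {a..a+L} (\<lambda>x. p m x - (p m x - complex_of_real (f x)))"
    by (rule sqi_diff[OF s2 s1]) auto
  thus ?thesis by simp
qed

lemma h2per_sqi: "H2per L f \<Longrightarrow> sqi {a..a+L} (\<lambda>x. complex_of_real (f x))"
  unfolding H2per_def using h2_sqi by blast

lemma cf_diff:
  assumes L: "L > 0" and g: "sqi {0..L} g" and h: "sqi {0..L} h"
  shows "cf L (\<lambda>x. g x - h x) n = cf L g n - cf L h n"
proof -
  have "(LINT x:{0..L}|lborel. (g x - h x) * cnj (ee L n x)) = (LINT x:{0..L}|lborel. g x * cnj (ee L n x)) - (LINT x:{0..L}|lborel. h x * cnj (ee L n x))"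
    unfolding left_diff_distrib
    by (rule set_integral_diff(2); intro set_integrable_prod g h sqi_cnj_ee) auto
  thus ?thesis unfolding cf_def by (simp add: diff_divide_distrib)
qed

lemma cf_single_le:
  assumes L: "L > 0" and g: "sqi {0..L} g"
  shows "L * (cmod (cf L g n))\<^sup>2 \<le> (LINT x:{0..L}|lborel. (cmod (g x))\<^sup>2)"
proof -
  have "(cmod (cf L g n))\<^sup>2 \<le> (\<Sum>k\<in>{-int (nat \<bar>n\<bar>)..int (nat \<bar>n\<bar>)}. (cmod (cf L g k))\<^sup>2)"
    by (rule member_le_sum) auto
  hence "L * (cmod (cf L g n))\<^sup>2 \<le> L * (\<Sum>k\<in>{-int (nat \<bar>n\<bar>)..int (nat \<bar>n\<bar>)}. (cmod (cf L g k))\<^sup>2)"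
    using L by simp
  also have "\<dots> \<le> (LINT x:{0..L}|lborel. (cmod (g x))\<^sup>2)" by (rule bessel[OF L g])
  finally show ?thesis .
qed

lemma cf_conv:
  assumes L: "L > 0" and h: "h2approx L f p" and fm: "f \<in> borel_measurable borel"
  shows "(\<lambda>m. cf L (p m) n) \<longlonglongrightarrow> cf L (\<lambda>x. complex_of_real (f x)) n"
proof -
  have tp: "\<And>m. trig_poly L (p m)" using h by (simp add: h2approx_def)
  have fs: "sqi {0..L} (\<lambda>x. complex_of_real (f x))" using h2_sqi[OF h fm, of 0] by simp
  have ps: "sqi {0..L} (p m)" for m by (rule sqi_cont, rule trig_poly_cont[OF tp])
  have lim: "(\<lambda>m. LINT x:{0..L}|lborel. (cmod (p m x - complex_of_real (f x)))\<^sup>2) \<longlonglongrightarrow> 0"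
    using h2approx_window(2)[OF h fm, of 0] by simp
  have bd: "norm (cf L (p m) n - cf L (\<lambda>x. complex_of_real (f x)) n) \<le> sqrt ((LINT x:{0..L}|lborel. (cmod (p m x - complex_of_real (f x)))\<^sup>2) / L)" for m
  proof -
    have d: "sqi {0..L} (\<lambda>x. p m x - complex_of_real (f x))" by (rule sqi_diff[OF ps fs]) auto
    have "L * (cmod (cf L (\<lambda>x. p m x - complex_of_real (f x)) n))\<^sup>2 \<le> (LINT x:{0..L}|lborel. (cmod (p m x - complex_of_real (f x)))\<^sup>2)"
      by (rule cf_single_le[OF L d])
    hence "(cmod (cf L (p m) n - cf L (\<lambda>x. complex_of_real (f x)) n))\<^sup>2 \<le> (LINT x:{0..L}|lborel. (cmod (p m x - complex_of_real (f x)))\<^sup>2) / L"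
      using L by (simp add: cf_diff[OF L ps fs] field_simps)
    thus ?thesis by (simp add: real_le_rsqrt)
  qed
  have "(\<lambda>m. (LINT x:{0..L}|lborel. (cmod (p m x - complex_of_real (f x)))\<^sup>2) / L) \<longlonglongrightarrow> 0 / L"
    by (rule tendsto_divide[OF lim tendsto_const]) (use L in simp)
  hence "(\<lambda>m. sqrt ((LINT x:{0..L}|lborel. (cmod (p m x - complex_of_real (f x)))\<^sup>2) / L)) \<longlonglongrightarrow> sqrt (0 / L)"
    by (rule tendsto_real_sqrt)
  hence z: "(\<lambda>m. sqrt ((LINT x:{0..L}|lborel. (cmod (p m x - complex_of_real (f x)))\<^sup>2) / L)) \<longlonglongrightarrow> 0"
    by simp
  have "(\<lambda>m. cf L (p m) n - cf L (\<lambda>x. complex_of_real (f x)) n) \<longlonglongrightarrow> 0"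
    by (rule Lim_null_comparison[OF always_eventually[OF allI[OF bd]] z])
  thus ?thesis by (simp add: LIM_zero_iff)
qed

lemma norm_of_real_sq: "(cmod (complex_of_real r))\<^sup>2 = r\<^sup>2"
  by simp

lemma parseval:
  assumes L: "L > 0" and h: "h2approx L f p" and fm: "f \<in> borel_measurable borel"
  shows "(\<lambda>N::nat. L * (\<Sum>n\<in>{-int N..int N}. (cmod (cf L (\<lambda>x. complex_of_real (f x)) n))\<^sup>2))
           \<longlonglongrightarrow> (LINT x:{0..L}|lborel. (f x)\<^sup>2)"
proof (rule LIMSEQ_I)
  fix r :: real assume r: "0 < r"
  let ?g = "\<lambda>x. complex_of_real (f x)"
  let ?X = "\<lambda>N::nat. L * (\<Sum>n\<in>{-int N..int N}. (cmod (cf L ?g n))\<^sup>2)"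
  have tp: "\<And>m. trig_poly L (p m)" using h by (simp add: h2approx_def)
  have gs: "sqi {0..L} ?g" using h2_sqi[OF h fm, of 0] by simp
  have F: "(LINT x:{0..L}|lborel. (cmod (?g x))\<^sup>2) = (LINT x:{0..L}|lborel. (f x)\<^sup>2)"
    by simp
  have lim: "(\<lambda>m. LINT x:{0..L}|lborel. (cmod (p m x - ?g x))\<^sup>2) \<longlonglongrightarrow> 0"
    using h2approx_window(2)[OF h fm, of 0] by simp
  obtain m where m: "(LINT x:{0..L}|lborel. (cmod (p m x - ?g x))\<^sup>2) < r"
    using order_tendstoD(2)[OF lim r] by (meson eventually_sequentially order_refl)
  obtain N0 c where pm: "p m = tp L N0 c" using trig_poly_tp[OF tp[of m]] by blast
  show "\<exists>no. \<forall>N\<ge>no. norm (?X N - (LINT x:{0..L}|lborel. (f x)\<^sup>2)) < r"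
  proof (intro exI allI impI)
    fix N assume N: "N0 \<le> N"
    let ?c = "\<lambda>n. if \<bar>n\<bar> \<le> int N0 then c n else 0"
    have "(LINT x:{0..L}|lborel. (cmod (?g x))\<^sup>2) - ?X N \<le> (LINT x:{0..L}|lborel. (cmod (?g x - tp L N ?c x))\<^sup>2)"
      by (rule best_le[OF L gs])
    also have "\<dots> = (LINT x:{0..L}|lborel. (cmod (p m x - ?g x))\<^sup>2)"
      unfolding pm tp_extend[OF N, of L c] by (simp add: norm_minus_commute)
    finally have lo: "(LINT x:{0..L}|lborel. (f x)\<^sup>2) - ?X N < r" using m F by linarith
    have up: "?X N \<le> (LINT x:{0..L}|lborel. (f x)\<^sup>2)" using bessel[OF L gs, of N] F by linarith
    show "norm (?X N - (LINT x:{0..L}|lborel. (f x)\<^sup>2)) < r" using lo up r by simp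
  qed
qed

lemma sum_restrict_le:
  fixes t :: "int \<Rightarrow> real"
  assumes "\<And>n. 0 \<le> t n"
  shows "(\<Sum>n\<in>{-int K..int K}. (if \<bar>n\<bar> \<le> int N then t n else 0)) \<le> (\<Sum>n\<in>{-int N..int N}. t n)"
proof -
  have "(\<Sum>n\<in>{-int K..int K}. (if \<bar>n\<bar> \<le> int N then t n else 0)) = (\<Sum>n\<in>{-int K..int K}. (if n \<in> {-int N..int N} then t n else 0))"
    by (intro sum.cong) auto
  also have "\<dots> = (\<Sum>n\<in>{-int K..int K} \<inter> {-int N..int N}. t n)"
    by (rule sum.inter_restrict[symmetric]) simp
  also have "\<dots> \<le> (\<Sum>n\<in>{-int N..int N}. t n)"
    by (rule sum_mono2) (auto simp: assms)
  finally show ?thesis .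
qed

lemma coeff_sum_bound:
  assumes L: "L > 0" and h: "h2approx L f p" and fm: "f \<in> borel_measurable borel"
    and w: "\<And>n. 0 \<le> w n"
    and B: "\<And>m N c. p m = tp L N c \<Longrightarrow> L * (\<Sum>n\<in>{-int N..int N}. w n * (cmod (c n))\<^sup>2) \<le> B"
  shows "L * (\<Sum>n\<in>{-int K..int K}. w n * (cmod (cf L (\<lambda>x. complex_of_real (f x)) n))\<^sup>2) \<le> B"
proof -
  have tp: "\<And>m. trig_poly L (p m)" using h by (simp add: h2approx_def)
  have lim: "(\<lambda>m. L * (\<Sum>n\<in>{-int K..int K}. w n * (cmod (cf L (p m) n))\<^sup>2))
      \<longlonglongrightarrow> L * (\<Sum>n\<in>{-int K..int K}. w n * (cmod (cf L (\<lambda>x. complex_of_real (f x)) n))\<^sup>2)"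
    by (intro tendsto_intros cf_conv[OF L h fm])
  have "L * (\<Sum>n\<in>{-int K..int K}. w n * (cmod (cf L (p m) n))\<^sup>2) \<le> B" for m
  proof -
    obtain N c where pm: "p m = tp L N c" using trig_poly_tp[OF tp[of m]] by blast
    have "(\<Sum>n\<in>{-int K..int K}. w n * (cmod (cf L (p m) n))\<^sup>2)
        = (\<Sum>n\<in>{-int K..int K}. (if \<bar>n\<bar> \<le> int N then w n * (cmod (c n))\<^sup>2 else 0))"
      unfolding pm cf_tp[OF L] by (intro sum.cong) auto
    also have "\<dots> \<le> (\<Sum>n\<in>{-int N..int N}. w n * (cmod (c n))\<^sup>2)"
      by (rule sum_restrict_le) (simp add: w)
    finally have "L * (\<Sum>n\<in>{-int K..int K}. w n * (cmod (cf L (p m) n))\<^sup>2) \<le> L * (\<Sum>n\<in>{-int N..int N}. w n * (cmod (c n))\<^sup>2)"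
      using L by simp
    also have "\<dots> \<le> B" by (rule B[OF pm])
    finally show ?thesis .
  qed
  thus ?thesis by (intro LIMSEQ_le_const2[OF lim]) auto
qed

lemma cmod_ic2: "(cmod ((\<i> * complex_of_real r) ^ 2 * z))\<^sup>2 = r ^ 4 * (cmod z)\<^sup>2"
  by (simp add: norm_mult norm_power power_mult_distrib flip: power_mult)

lemma h2norm_nonneg: "0 \<le> h2norm L g"
  unfolding h2norm_def by (intro real_sqrt_ge_zero sum_nonneg set_integral_nonneg') auto

lemma h2_bounds:
  assumes L: "L > 0" and h: "h2approx L f p" and fm: "f \<in> borel_measurable borel"
    and B: "\<And>m. h2norm L (p m) \<le> B"
  shows "(LINT x:{0..L}|lborel. (f x)\<^sup>2) \<le> B\<^sup>2"
    and "L * (\<Sum>n\<in>{-int K..int K}. (freq L * of_int n) ^ 4 * (cmod (cf L (\<lambda>x. complex_of_real (f x)) n))\<^sup>2) \<le> B\<^sup>2"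
proof -
  have hB: "(h2norm L (p m))\<^sup>2 \<le> B\<^sup>2" for m
    using B[of m] h2norm_nonneg[of L "p m"] by (intro power_mono) auto
  have b1: "L * (\<Sum>n\<in>{-int K..int K}. 1 * (cmod (cf L (\<lambda>x. complex_of_real (f x)) n))\<^sup>2) \<le> B\<^sup>2" for K
  proof (rule coeff_sum_bound[OF L h fm])
    fix m N c assume pm: "p m = tp L N c"
    show "L * (\<Sum>n\<in>{-int N..int N}. 1 * (cmod (c n))\<^sup>2) \<le> B\<^sup>2"
      using h2norm_tp_ge(2)[OF L, where N=N and c=c] hB[of m] pm by simp
  qed simp
  show "L * (\<Sum>n\<in>{-int K..int K}. (freq L * of_int n) ^ 4 * (cmod (cf L (\<lambda>x. complex_of_real (f x)) n))\<^sup>2) \<le> B\<^sup>2"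
  proof (rule coeff_sum_bound[OF L h fm])
    fix m N c assume pm: "p m = tp L N c"
    show "L * (\<Sum>n\<in>{-int N..int N}. (freq L * of_int n) ^ 4 * (cmod (c n))\<^sup>2) \<le> B\<^sup>2"
    proof -
      have e: "(\<Sum>n\<in>{-int N..int N}. (cmod ((\<i> * complex_of_real (freq L * of_int n)) ^ 2 * c n))\<^sup>2)
          = (\<Sum>n\<in>{-int N..int N}. (freq L * of_int n) ^ 4 * (cmod (c n))\<^sup>2)"
        by (simp only: cmod_ic2)
      show ?thesis using h2norm_tp_ge(1)[OF L, where N=N and c=c] hB[of m] pm unfolding e by simp
    qed
  qed simp
  show "(LINT x:{0..L}|lborel. (f x)\<^sup>2) \<le> B\<^sup>2"
    by (rule LIMSEQ_le_const2[OF parseval[OF L h fm]]) (use b1 in auto)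
qed

lemma freq_pos: "L > 0 \<Longrightarrow> freq L > 0"
  by (simp add: freq_def)

lemma tail_bound:
  assumes L: "L > 0" and h: "h2approx L f p" and fm: "f \<in> borel_measurable borel"
    and B: "\<And>m. h2norm L (p m) \<le> B" and N: "N \<ge> 1"
  shows "(LINT x:{0..L}|lborel. (f x)\<^sup>2) - L * (\<Sum>n\<in>{-int N..int N}. (cmod (cf L (\<lambda>x. complex_of_real (f x)) n))\<^sup>2)
         \<le> B\<^sup>2 / (freq L * real N) ^ 4"
proof -
  let ?a = "cf L (\<lambda>x. complex_of_real (f x))"
  let ?S = "\<lambda>K::nat. L * (\<Sum>n\<in>{-int K..int K}. (cmod (?a n))\<^sup>2)"
  have w: "freq L > 0" using freq_pos[OF L] .
  have wN: "(freq L * real N) ^ 4 > 0" using w N by simp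
  have step: "?S K - ?S N \<le> B\<^sup>2 / (freq L * real N) ^ 4" if K: "K \<ge> N" for K
  proof -
    have sub: "{-int N..int N} \<subseteq> {-int K..int K}" using K by auto
    have "?S K - ?S N = L * (\<Sum>n\<in>{-int K..int K} - {-int N..int N}. (cmod (?a n))\<^sup>2)"
      using sum.subset_diff[OF sub, of "\<lambda>n. (cmod (?a n))\<^sup>2"] by (simp add: algebra_simps)
    also have "\<dots> \<le> L * (\<Sum>n\<in>{-int K..int K} - {-int N..int N}. (freq L * of_int n) ^ 4 * (cmod (?a n))\<^sup>2 / (freq L * real N) ^ 4)"
    proof (intro mult_left_mono sum_mono)
      fix n assume n: "n \<in> {-int K..int K} - {-int N..int N}"
      hence "real N \<le> \<bar>real_of_int n\<bar>" by auto
      hence "(freq L * real N) ^ 4 \<le> (freq L * of_int n) ^ 4"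
      proof -
        assume a: "real N \<le> \<bar>real_of_int n\<bar>"
        have "(freq L * real N) ^ 4 \<le> (freq L * \<bar>real_of_int n\<bar>) ^ 4"
          using a w by (intro power_mono mult_left_mono) auto
        also have "\<dots> = \<bar>freq L * of_int n\<bar> ^ 4" using w by (simp add: abs_mult)
        also have "\<dots> = (freq L * of_int n) ^ 4" by (rule power_even_abs) simp
        finally show ?thesis .
      qed
      hence "1 \<le> (freq L * of_int n) ^ 4 / (freq L * real N) ^ 4" using wN by simp
      hence "1 * (cmod (?a n))\<^sup>2 \<le> ((freq L * of_int n) ^ 4 / (freq L * real N) ^ 4) * (cmod (?a n))\<^sup>2"
        by (intro mult_right_mono) auto
      thus "(cmod (?a n))\<^sup>2 \<le> (freq L * of_int n) ^ 4 * (cmod (?a n))\<^sup>2 / (freq L * real N) ^ 4" by simp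
    qed (use L in auto)
    also have "\<dots> = (L * (\<Sum>n\<in>{-int K..int K} - {-int N..int N}. (freq L * of_int n) ^ 4 * (cmod (?a n))\<^sup>2)) / (freq L * real N) ^ 4"
      by (simp only: sum_divide_distrib[symmetric] times_divide_eq_right)
    also have "\<dots> \<le> (L * (\<Sum>n\<in>{-int K..int K}. (freq L * of_int n) ^ 4 * (cmod (?a n))\<^sup>2)) / (freq L * real N) ^ 4"
      using wN L by (intro divide_right_mono mult_left_mono sum_mono2) auto
    also have "\<dots> \<le> B\<^sup>2 / (freq L * real N) ^ 4"
      using wN h2_bounds(2)[OF L h fm B, of K] by (intro divide_right_mono) auto
    finally show ?thesis .
  qed
  have lim: "(\<lambda>K. ?S K - ?S N) \<longlonglongrightarrow> (LINT x:{0..L}|lborel. (f x)\<^sup>2) - ?S N"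
    by (intro tendsto_diff parseval[OF L h fm] tendsto_const)
  show ?thesis
    by (rule LIMSEQ_le_const2[OF lim]) (use step in auto)
qed

lemma amgm: "0 < s \<Longrightarrow> (x::real) * y \<le> (s * x\<^sup>2 + y\<^sup>2 / s) / 2"
proof -
  assume s: "0 < s"
  have "0 \<le> (s * x - y)\<^sup>2" by simp
  hence "2 * s * (x * y) \<le> s\<^sup>2 * x\<^sup>2 + y\<^sup>2" by (simp add: power2_eq_square algebra_simps)
  hence "2 * s * (x * y) / s \<le> (s\<^sup>2 * x\<^sup>2 + y\<^sup>2) / s" using s by (intro divide_right_mono) auto
  thus ?thesis using s by (simp add: power2_eq_square field_simps)
qed

lemma amgm2: "0 < x \<Longrightarrow> 0 \<le> y \<Longrightarrow> (x::real) * y \<le> x ^ 4 * y\<^sup>2 + 1 / x\<^sup>2"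
proof -
  assume x: "0 < x" and y: "0 \<le> y"
  have "x * y = (x\<^sup>2 * y) * (1 / x)" using x by (simp add: power2_eq_square)
  also have "\<dots> \<le> (1 * (x\<^sup>2 * y)\<^sup>2 + (1 / x)\<^sup>2 / 1) / 2" by (rule amgm) simp
  also have "\<dots> \<le> x ^ 4 * y\<^sup>2 + 1 / x\<^sup>2"
    using x by (simp add: power_mult_distrib power2_eq_square field_simps) (simp add: power4_eq_xxxx)
  finally show ?thesis .
qed

lemma g2dg_zero:
  assumes L: "L > 0"
  shows "(LINT x:{0..L}|lborel. (tp L N c x)\<^sup>2 * tp L N (dc L c) x) = 0"
proof -
  let ?g = "tp L N c" and ?g' = "tp L N (dc L c)"
  have D: "((\<lambda>x. ?g x * (?g x * ?g x) / 3) has_vector_derivative (?g x)\<^sup>2 * ?g' x) (at x within {min 0 L..max 0 L})" for x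
  proof -
    have d: "(?g has_vector_derivative ?g' x) (at x within {min 0 L..max 0 L})" by (rule tp_has_deriv)
    have e: "(?g x * (?g x * ?g' x + ?g' x * ?g x) + ?g' x * (?g x * ?g x)) / 3 = (?g x)\<^sup>2 * ?g' x"
      by (simp add: power2_eq_square algebra_simps)
    have "((\<lambda>x. ?g x * (?g x * ?g x) / 3) has_vector_derivative
          (?g x * (?g x * ?g' x + ?g' x * ?g x) + ?g' x * (?g x * ?g x)) / 3) (at x within {min 0 L..max 0 L})"
      by (intro has_vector_derivative_divide has_vector_derivative_mult d)
    thus ?thesis unfolding e .
  qed
  have C: "continuous_on {min 0 L..max 0 L} (\<lambda>x. (?g x)\<^sup>2 * ?g' x)"
    by (intro continuous_intros continuous_on_tp)
  have "(LBINT x=0..L. (?g x)\<^sup>2 * ?g' x) = ?g L * (?g L * ?g L) / 3 - ?g 0 * (?g 0 * ?g 0) / 3"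
    using interval_integral_FTC_finite[of 0 L "\<lambda>x. (?g x)\<^sup>2 * ?g' x" "\<lambda>x. ?g x * (?g x * ?g x) / 3", OF C D]
    by (simp add: zero_ereal_def)
  also have "?g L = ?g 0" using tp_shift[of L N c 0 L] by (simp add: tp_def ee_periodic[OF L, of _ 0, simplified])
  finally show ?thesis using L interval_integral_Icc[of 0 L "\<lambda>x. (?g x)\<^sup>2 * ?g' x"] by (simp add: zero_ereal_def)
qed


lemma norm_dc: "cmod (dc L c n) = \<bar>freq L * of_int n\<bar> * cmod (c n)"
  by (simp add: dc_def norm_mult abs_mult)

lemma G_bound:
  assumes L: "L > 0" and h: "h2approx L f p" and fm: "f \<in> borel_measurable borel"
    and B: "\<And>m. h2norm L (p m) \<le> B"
  shows "(\<Sum>n\<in>{-int N..int N}. cmod (dc L (cf L (\<lambda>x. complex_of_real (f x))) n)) \<le> B\<^sup>2 / L + (2 * real N + 1) / (freq L)\<^sup>2"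
proof -
  let ?a = "cf L (\<lambda>x. complex_of_real (f x))"
  let ?w = "freq L"
  have w: "?w > 0" using freq_pos[OF L] .
  have trm: "cmod (dc L ?a n) \<le> (?w * of_int n) ^ 4 * (cmod (?a n))\<^sup>2 + 1 / ?w\<^sup>2" for n
  proof (cases "n = 0")
    case True then show ?thesis by (simp add: dc_def)
  next
    case False
    hence n1: "1 \<le> \<bar>real_of_int n\<bar>" by linarith
    have pos: "0 < \<bar>?w * of_int n\<bar>" using w False by simp
    have "cmod (dc L ?a n) = \<bar>?w * of_int n\<bar> * cmod (?a n)" by (rule norm_dc)
    also have "\<dots> \<le> \<bar>?w * of_int n\<bar> ^ 4 * (cmod (?a n))\<^sup>2 + 1 / \<bar>?w * of_int n\<bar>\<^sup>2"
      by (rule amgm2[OF pos]) simp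
    also have "\<bar>?w * of_int n\<bar> ^ 4 = (?w * of_int n) ^ 4" by (rule power_even_abs) simp
    also have "1 / \<bar>?w * of_int n\<bar>\<^sup>2 \<le> 1 / ?w\<^sup>2"
    proof -
      have "?w \<le> \<bar>?w * of_int n\<bar>" using w n1 by (simp add: abs_mult)
      hence "?w\<^sup>2 \<le> \<bar>?w * of_int n\<bar>\<^sup>2" using w by (intro power_mono) auto
      thus ?thesis using w pos by (intro divide_left_mono) auto
    qed
    finally show ?thesis by simp
  qed
  have "(\<Sum>n\<in>{-int N..int N}. cmod (dc L ?a n)) \<le> (\<Sum>n\<in>{-int N..int N}. (?w * of_int n) ^ 4 * (cmod (?a n))\<^sup>2 + 1 / ?w\<^sup>2)"
    by (rule sum_mono) (rule trm)
  also have "\<dots> = (\<Sum>n\<in>{-int N..int N}. (?w * of_int n) ^ 4 * (cmod (?a n))\<^sup>2) + (2 * real N + 1) / ?w\<^sup>2"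
  proof -
    have "card {-int N..int N} = 2 * N + 1" by simp
    thus ?thesis by (simp add: sum.distrib)
  qed
  also have "(\<Sum>n\<in>{-int N..int N}. (?w * of_int n) ^ 4 * (cmod (?a n))\<^sup>2) \<le> B\<^sup>2 / L"
    using h2_bounds(2)[OF L h fm B, of N] L by (simp add: field_simps)
  finally show ?thesis by simp
qed

lemma norm_tp_le: "cmod (tp L N c x) \<le> (\<Sum>n\<in>{-int N..int N}. cmod (c n))"
  unfolding tp_def by (rule order_trans[OF norm_sum]) (simp add: norm_mult)

lemma R_bound:
  assumes L: "L > 0" and h: "h2approx L f p" and fm: "f \<in> borel_measurable borel"
    and B: "\<And>m. h2norm L (p m) \<le> B" and N: "N \<ge> 1"
  shows "norm (LINT x:{0..L}|lborel. (complex_of_real (f x))\<^sup>2 * tp L N (dc L (cf L (\<lambda>x. complex_of_real (f x)))) x)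
         \<le> (B\<^sup>2 / L + 3 / (freq L)\<^sup>2) * (B\<^sup>2 / (freq L) ^ 4 + 4 * B\<^sup>2) / (2 * real N)"
proof -
  define F where "F = (\<lambda>x. complex_of_real (f x))"
  define a where "a = cf L F"
  define g where "g = tp L N a"
  define g' where "g' = tp L N (dc L a)"
  define G where "G = (\<Sum>n\<in>{-int N..int N}. cmod (dc L a n))"
  define w where "w = freq L"
  define s where "s = (real N)\<^sup>2"
  have w: "w > 0" using freq_pos[OF L] by (simp add: w_def)
  have s: "s > 0" using N by (simp add: s_def)
  have Fs: "sqi {0..L} F" using h2_sqi[OF h fm, of 0] by (simp add: F_def)
  have gs: "sqi {0..L} g" unfolding g_def by (rule sqi_tp)
  have g'm: "g' \<in> borel_measurable borel" unfolding g'_def by (rule borel_measurable_continuous_onI, rule continuous_on_tp)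
  have g'b: "cmod (g' x) \<le> G" for x unfolding g'_def G_def by (rule norm_tp_le)
  have G0: "0 \<le> G" unfolding G_def by (simp add: sum_nonneg)
  have Gle: "G \<le> B\<^sup>2 / L + (2 * real N + 1) / w\<^sup>2"
    unfolding G_def a_def F_def w_def by (rule G_bound[OF L h fm B])
  have Fg': "sqi {0..L} (\<lambda>x. g' x * F x)" by (rule sqi_mult_bounded[OF Fs g'm g'b]) auto
  have gg': "sqi {0..L} (\<lambda>x. g' x * g x)" by (rule sqi_mult_bounded[OF gs g'm g'b]) auto
  have i1: "set_integrable lborel {0..L} (\<lambda>x. (F x)\<^sup>2 * g' x)"
    using set_integrable_prod[OF Fs Fg'] by (simp add: power2_eq_square algebra_simps)
  have i2: "set_integrable lborel {0..L} (\<lambda>x. (g x)\<^sup>2 * g' x)"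
    using set_integrable_prod[OF gs gg'] by (simp add: power2_eq_square algebra_simps)
  have i3: "set_integrable lborel {0..L} (\<lambda>x. ((F x)\<^sup>2 - (g x)\<^sup>2) * g' x)"
    using set_integral_diff(1)[OF i1 i2] by (simp add: algebra_simps)
  have z: "(LINT x:{0..L}|lborel. (g x)\<^sup>2 * g' x) = 0"
    unfolding g_def g'_def by (rule g2dg_zero[OF L])
  have e1: "(LINT x:{0..L}|lborel. (F x)\<^sup>2 * g' x) = (LINT x:{0..L}|lborel. ((F x)\<^sup>2 - (g x)\<^sup>2) * g' x)"
    using set_integral_diff(2)[OF i1 i2] z by (simp add: algebra_simps)
  have Fmg: "sqi {0..L} (\<lambda>x. F x - g x)" by (rule sqi_diff[OF Fs gs]) auto
  have Fpg: "sqi {0..L} (\<lambda>x. F x + g x)" by (rule sqi_add[OF Fs gs]) auto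
  define E where "E = (LINT x:{0..L}|lborel. (cmod (F x - g x))\<^sup>2)"
  define D where "D = (LINT x:{0..L}|lborel. (cmod (F x + g x))\<^sup>2)"
  have ptw: "norm (((F x)\<^sup>2 - (g x)\<^sup>2) * g' x) \<le> G * ((s * (cmod (F x - g x))\<^sup>2 + (cmod (F x + g x))\<^sup>2 / s) / 2)" for x
  proof -
    have "norm (((F x)\<^sup>2 - (g x)\<^sup>2) * g' x) = (cmod (F x - g x) * cmod (F x + g x)) * cmod (g' x)"
      by (simp add: norm_mult power2_eq_square algebra_simps flip: norm_mult)
    also have "\<dots> \<le> ((s * (cmod (F x - g x))\<^sup>2 + (cmod (F x + g x))\<^sup>2 / s) / 2) * G"
    proof (rule mult_mono)
      show "0 \<le> (s * (cmod (F x - g x))\<^sup>2 + (cmod (F x + g x))\<^sup>2 / s) / 2"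
        using s by (intro divide_nonneg_pos add_nonneg_nonneg mult_nonneg_nonneg divide_nonneg_pos) auto
      show "cmod (F x - g x) * cmod (F x + g x) \<le> (s * (cmod (F x - g x))\<^sup>2 + (cmod (F x + g x))\<^sup>2 / s) / 2"
        by (rule amgm[OF s])
    qed (auto intro: g'b)
    finally show ?thesis by (simp add: mult.commute)
  qed
  have iR: "set_integrable lborel {0..L} (\<lambda>x. G * ((s * (cmod (F x - g x))\<^sup>2 + (cmod (F x + g x))\<^sup>2 / s) / 2))"
    using Fmg Fpg
    by (intro set_integrable_mult_right set_integrable_divide set_integral_add set_integrable_mult_right set_integrable_sq) auto
  have "norm (LINT x:{0..L}|lborel. (F x)\<^sup>2 * g' x) \<le> (LINT x:{0..L}|lborel. norm (((F x)\<^sup>2 - (g x)\<^sup>2) * g' x))"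
    unfolding e1 by (rule set_integral_norm_bound[OF i3])
  also have "\<dots> \<le> (LINT x:{0..L}|lborel. G * ((s * (cmod (F x - g x))\<^sup>2 + (cmod (F x + g x))\<^sup>2 / s) / 2))"
    by (rule set_integral_mono[OF set_integrable_norm[OF i3] iR ptw])
  also have "\<dots> = G * ((s * E + D / s) / 2)"
    unfolding E_def D_def using Fmg Fpg
    by (simp add: set_integral_mult_right set_integral_divide_zero set_integral_add set_integrable_sq
        set_integrable_mult_right set_integrable_divide)
  finally have main: "norm (LINT x:{0..L}|lborel. (F x)\<^sup>2 * g' x) \<le> G * ((s * E + D / s) / 2)" .
  have fsq: "(LINT x:{0..L}|lborel. (cmod (F x))\<^sup>2) = (LINT x:{0..L}|lborel. (f x)\<^sup>2)"
    by (simp add: F_def)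
  have Eb: "E \<le> B\<^sup>2 / (w * real N) ^ 4"
  proof -
    have "E = (LINT x:{0..L}|lborel. (f x)\<^sup>2) - L * (\<Sum>n\<in>{-int N..int N}. (cmod (a n))\<^sup>2)"
      unfolding E_def g_def a_def using tail_eq[OF L Fs, of N] fsq by simp
    also have "\<dots> \<le> B\<^sup>2 / (w * real N) ^ 4"
      unfolding a_def F_def w_def by (rule tail_bound[OF L h fm B N])
    finally show ?thesis .
  qed
  have Db: "D \<le> 4 * B\<^sup>2"
  proof -
    have "D \<le> (LINT x:{0..L}|lborel. 2 * (cmod (F x))\<^sup>2 + 2 * (cmod (g x))\<^sup>2)"
      unfolding D_def
    proof (rule set_integral_mono)
      show "set_integrable lborel {0..L} (\<lambda>x. (cmod (F x + g x))\<^sup>2)" using Fpg by (rule set_integrable_sq)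
      show "set_integrable lborel {0..L} (\<lambda>x. 2 * (cmod (F x))\<^sup>2 + 2 * (cmod (g x))\<^sup>2)"
        using Fs gs by (intro set_integral_add set_integrable_mult_right set_integrable_sq) auto
      fix x
      have "(cmod (F x + g x))\<^sup>2 \<le> (cmod (F x) + cmod (g x))\<^sup>2"
        by (simp add: norm_triangle_ineq power_mono)
      also have "\<dots> \<le> 2 * (cmod (F x))\<^sup>2 + 2 * (cmod (g x))\<^sup>2"
        using sum_squares_bound[of "cmod (F x)" "cmod (g x)"] by (simp add: power2_sum)
      finally show "(cmod (F x + g x))\<^sup>2 \<le> 2 * (cmod (F x))\<^sup>2 + 2 * (cmod (g x))\<^sup>2" .
    qed
    also have "\<dots> = 2 * (LINT x:{0..L}|lborel. (f x)\<^sup>2) + 2 * (LINT x:{0..L}|lborel. (cmod (g x))\<^sup>2)"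
      using Fs gs fsq by (simp add: set_integral_add set_integrable_mult_right set_integrable_sq set_integral_mult_right)
    also have "(LINT x:{0..L}|lborel. (cmod (g x))\<^sup>2) \<le> (LINT x:{0..L}|lborel. (f x)\<^sup>2)"
      unfolding g_def int_tp_sq[OF L] a_def using bessel[OF L Fs, of N] fsq by simp
    also have "(LINT x:{0..L}|lborel. (f x)\<^sup>2) \<le> B\<^sup>2" by (rule h2_bounds(1)[OF L h fm B])
    finally show ?thesis by simp
  qed
  have E0: "0 \<le> E" unfolding E_def by (rule set_integral_nonneg') simp
  have D0: "0 \<le> D" unfolding D_def by (rule set_integral_nonneg') simp
  have N1: "1 \<le> real N" using N by simp
  have "s * E + D / s \<le> s * (B\<^sup>2 / (w * real N) ^ 4) + 4 * B\<^sup>2 / s"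
    using Eb Db s by (intro add_mono mult_left_mono divide_right_mono) auto
  also have "\<dots> = (B\<^sup>2 / w ^ 4 + 4 * B\<^sup>2) / (real N)\<^sup>2"
    using w N1 by (simp add: s_def field_simps power2_eq_square power4_eq_xxxx)
  finally have sE: "s * E + D / s \<le> (B\<^sup>2 / w ^ 4 + 4 * B\<^sup>2) / (real N)\<^sup>2" .
  have GN: "G \<le> real N * (B\<^sup>2 / L + 3 / w\<^sup>2)"
  proof -
    have "1 * (B\<^sup>2 / L) \<le> real N * (B\<^sup>2 / L)" using N1 L by (intro mult_right_mono) auto
    hence "B\<^sup>2 / L \<le> real N * (B\<^sup>2 / L)" by simp
    moreover have "(2 * real N + 1) / w\<^sup>2 \<le> real N * (3 / w\<^sup>2)"
      using N1 w by (simp add: field_simps)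
    ultimately show ?thesis using Gle by (simp add: distrib_left)
  qed
  have "G * ((s * E + D / s) / 2) \<le> (real N * (B\<^sup>2 / L + 3 / w\<^sup>2)) * (((B\<^sup>2 / w ^ 4 + 4 * B\<^sup>2) / (real N)\<^sup>2) / 2)"
    using GN sE G0 E0 D0 s by (intro mult_mono divide_right_mono) (auto intro!: add_nonneg_nonneg mult_nonneg_nonneg divide_nonneg_pos)
  also have "\<dots> = (B\<^sup>2 / L + 3 / w\<^sup>2) * (B\<^sup>2 / w ^ 4 + 4 * B\<^sup>2) / (2 * real N)"
  proof -
    have alg: "\<And>X Y::real. real N * X * (Y / (real N)\<^sup>2 / 2) = X * Y / (2 * real N)"
      using N1 by (simp add: power2_eq_square field_simps)
    show ?thesis by (rule alg)
  qed
  finally have fin: "G * ((s * E + D / s) / 2) \<le> (B\<^sup>2 / L + 3 / w\<^sup>2) * (B\<^sup>2 / w ^ 4 + 4 * B\<^sup>2) / (2 * real N)" .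
  have "norm (LINT x:{0..L}|lborel. (F x)\<^sup>2 * g' x) \<le> (B\<^sup>2 / L + 3 / w\<^sup>2) * (B\<^sup>2 / w ^ 4 + 4 * B\<^sup>2) / (2 * real N)"
    using order_trans[OF main fin] .
  thus ?thesis unfolding F_def a_def g'_def w_def .
qed

lemma deriv_cos_gen: "deriv (\<lambda>x. c * cos (a * x + b)) = (\<lambda>x. (c * a) * cos (a * x + (b + pi / 2)))"
proof
  fix x
  have "((\<lambda>x. c * cos (a * x + b)) has_real_derivative c * (- sin (a * x + b) * a)) (at x)"
    by (auto intro!: derivative_eq_intros)
  hence "deriv (\<lambda>x. c * cos (a * x + b)) x = c * (- sin (a * x + b) * a)" by (rule DERIV_imp_deriv)
  also have "\<dots> = (c * a) * (- sin (a * x + b))" by simp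
  also have "- sin (a * x + b) = cos (a * x + (b + pi / 2))" using minus_sin_cos_eq[of "a * x + b"] by (simp add: add.assoc)
  finally show "deriv (\<lambda>x. c * cos (a * x + b)) x = (c * a) * cos (a * x + (b + pi / 2))" .
qed

lemma deriv_pow_cos: "(deriv ^^ k) (\<lambda>x. cos (a * x + b)) = (\<lambda>x. a ^ k * cos (a * x + (b + real k * pi / 2)))"
proof (induction k)
  case 0 then show ?case by simp
next
  case (Suc k)
  have "(deriv ^^ Suc k) (\<lambda>x. cos (a * x + b)) = deriv (\<lambda>x. a ^ k * cos (a * x + (b + real k * pi / 2)))"
    using Suc by simp
  also have "\<dots> = (\<lambda>x. (a ^ k * a) * cos (a * x + ((b + real k * pi / 2) + pi / 2)))" by (rule deriv_cos_gen)
  also have "\<dots> = (\<lambda>x. a ^ Suc k * cos (a * x + (b + real (Suc k) * pi / 2)))"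
    by (simp add: algebra_simps add_divide_distrib)
  finally show ?case .
qed

lemma cos_test_smooth: fixes a b :: real shows "\<forall>k x. ((deriv ^^ k) (\<lambda>x. cos (a * x + b))) differentiable (at x)"
proof (intro allI)
  fix k x
  have "((\<lambda>x. a ^ k * cos (a * x + (b + real k * pi / 2))) has_real_derivative
        a ^ k * (- sin (a * x + (b + real k * pi / 2)) * a)) (at x)"
    by (auto intro!: derivative_eq_intros)
  hence "(\<lambda>x. a ^ k * cos (a * x + (b + real k * pi / 2))) differentiable (at x)"
    by (auto simp: real_differentiable_def)
  thus "((deriv ^^ k) (\<lambda>x. cos (a * x + b))) differentiable (at x)"
    by (subst deriv_pow_cos)
qed

lemma cos_test_periodic:
  assumes L: "L > 0"
  shows "\<forall>x. cos (freq L * of_int n * (x + L) + b) = cos (freq L * of_int n * x + b)"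
proof
  fix x
  have e: "freq L * of_int n * (x + L) + b = (freq L * of_int n * x + b) + (2 * pi) * of_int n"
    using L by (simp add: freq_def field_simps)
  show "cos (freq L * of_int n * (x + L) + b) = cos (freq L * of_int n * x + b)"
    unfolding e cos_add cos_int_2pin sin_int_2pin by simp
qed

lemma real_int_sq_bounded:
  fixes f h :: "real \<Rightarrow> real"
  assumes f: "f \<in> borel_measurable borel" and f2: "set_integrable lborel A (\<lambda>x. (f x)\<^sup>2)"
    and h: "h \<in> borel_measurable borel" and C: "\<And>x. \<bar>h x\<bar> \<le> C" and A: "A \<in> sets borel"
  shows "set_integrable lborel A (\<lambda>x. (f x)\<^sup>2 * h x)"
proof (rule set_integrable_bound[where f="\<lambda>x. C * (f x)\<^sup>2"])
  show "set_integrable lborel A (\<lambda>x. C * (f x)\<^sup>2)" using f2 by (rule set_integrable_mult_right)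
  show "set_borel_measurable lborel A (\<lambda>x. (f x)\<^sup>2 * h x)" using f h A by (intro sbm) auto
  show "AE x\<in>A in lborel. norm ((f x)\<^sup>2 * h x) \<le> norm (C * (f x)\<^sup>2)"
  proof (rule AE_I2, rule impI)
    fix x
    have "\<bar>(f x)\<^sup>2 * h x\<bar> = (f x)\<^sup>2 * \<bar>h x\<bar>" by (simp add: abs_mult)
    also have "\<dots> \<le> (f x)\<^sup>2 * C" by (intro mult_left_mono C) simp
    finally show "norm ((f x)\<^sup>2 * h x) \<le> norm (C * (f x)\<^sup>2)" by (simp add: mult.commute)
  qed
qed

lemma real_int_bounded:
  fixes f h :: "real \<Rightarrow> real"
  assumes f: "f \<in> borel_measurable borel" and f2: "set_integrable lborel {a..b} (\<lambda>x. (f x)\<^sup>2)"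
    and h: "h \<in> borel_measurable borel" and C: "\<And>x. \<bar>h x\<bar> \<le> C"
  shows "set_integrable lborel {a..b} (\<lambda>x. f x * h x)"
proof (rule set_integrable_bound[where f="\<lambda>x. C * (1 + (f x)\<^sup>2)"])
  have one: "set_integrable lborel {a..b} (\<lambda>x. 1::real)" by (rule borel_integrable_atLeastAtMost') (rule continuous_on_const)
  show "set_integrable lborel {a..b} (\<lambda>x. C * (1 + (f x)\<^sup>2))"
    using f2 one by (intro set_integrable_mult_right set_integral_add)
  show "set_borel_measurable lborel {a..b} (\<lambda>x. f x * h x)" using f h by (intro sbm) auto
  show "AE x\<in>{a..b} in lborel. norm (f x * h x) \<le> norm (C * (1 + (f x)\<^sup>2))"
  proof (rule AE_I2, rule impI)
    fix x
    have C0: "0 \<le> C" using C[of x] by linarith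
    have fx: "\<bar>f x\<bar> \<le> 1 + (f x)\<^sup>2"
    proof (cases "\<bar>f x\<bar> \<le> 1")
      case True then show ?thesis using zero_le_power2[of "f x"] by linarith
    next
      case False
      hence "\<bar>f x\<bar> * 1 \<le> \<bar>f x\<bar> * \<bar>f x\<bar>" by (intro mult_left_mono) auto
      also have "\<bar>f x\<bar> * \<bar>f x\<bar> = (f x)\<^sup>2" by (simp add: power2_eq_square abs_mult_self_eq)
      finally show ?thesis by simp
    qed
    have "\<bar>f x * h x\<bar> = \<bar>f x\<bar> * \<bar>h x\<bar>" by (simp add: abs_mult)
    also have "\<dots> \<le> (1 + (f x)\<^sup>2) * C" by (intro mult_mono fx C) auto
    finally show "norm (f x * h x) \<le> norm (C * (1 + (f x)\<^sup>2))" using C0 by (simp add: mult.commute)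
  qed
qed


lemma sol_sq:
  assumes sol: "kdv_solution L \<delta> u"
  shows "(\<lambda>x. u x t) \<in> borel_measurable borel" and "set_integrable lborel {0..L} (\<lambda>x. (u x t)\<^sup>2)"
proof -
  have H: "H2per L (\<lambda>x. u x t)" using sol by (simp add: kdv_solution_def)
  have "sqi {0..L} (\<lambda>x. complex_of_real (u x t))" using h2per_sqi[OF H, of 0] by simp
  thus "(\<lambda>x. u x t) \<in> borel_measurable borel" and "set_integrable lborel {0..L} (\<lambda>x. (u x t)\<^sup>2)"
    by (simp_all add: sqi_of_real)
qed

lemma weak_cos:
  assumes sol: "kdv_solution L \<delta> u" and L: "L > 0"
  shows "((\<lambda>s. LINT x:{0..L}|lborel. u x s * cos (freq L * of_int n * x + b)) has_real_derivative
     (LINT x:{0..L}|lborel. (u x t)\<^sup>2 / 2 * ((freq L * of_int n) * cos (freq L * of_int n * x + (b + pi / 2)))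
        + \<delta>\<^sup>2 * u x t * ((freq L * of_int n) ^ 3 * cos (freq L * of_int n * x + (b + 3 * pi / 2))))) (at t)"
proof -
  let ?a = "freq L * of_int n"
  have W: "\<forall>\<phi>::real \<Rightarrow> real. (\<forall>k x. ((deriv ^^ k) \<phi>) differentiable (at x)) \<longrightarrow> (\<forall>x. \<phi> (x + L) = \<phi> x) \<longrightarrow>
        (\<forall>t. ((\<lambda>s. LINT x:{0..L}|lborel. u x s * \<phi> x) has_real_derivative
               (LINT x:{0..L}|lborel. (u x t)\<^sup>2 / 2 * deriv \<phi> x + \<delta>\<^sup>2 * u x t * (deriv ^^ 3) \<phi> x)) (at t))"
    using sol by (simp add: kdv_solution_def)
  have D: "((\<lambda>s. LINT x:{0..L}|lborel. u x s * cos (?a * x + b)) has_real_derivative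
               (LINT x:{0..L}|lborel. (u x t)\<^sup>2 / 2 * deriv (\<lambda>x. cos (?a * x + b)) x + \<delta>\<^sup>2 * u x t * (deriv ^^ 3) (\<lambda>x. cos (?a * x + b)) x)) (at t)"
  proof -
    have s1: "\<forall>k x. ((deriv ^^ k) (\<lambda>x. cos (?a * x + b))) differentiable (at x)" by (rule cos_test_smooth)
    have s2: "\<forall>x. (\<lambda>x. cos (?a * x + b)) (x + L) = (\<lambda>x. cos (?a * x + b)) x"
      using cos_test_periodic[OF L] by simp
    show ?thesis using W[rule_format, of "\<lambda>x. cos (?a * x + b)", OF s1[rule_format] s2[rule_format]] by simp
  qed
  have d1: "deriv (\<lambda>x. cos (?a * x + b)) = (\<lambda>x. ?a * cos (?a * x + (b + pi / 2)))"
    using deriv_pow_cos[of 1 ?a b] by simp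
  have d3: "(deriv ^^ 3) (\<lambda>x. cos (?a * x + b)) = (\<lambda>x. ?a ^ 3 * cos (?a * x + (b + 3 * pi / 2)))"
    using deriv_pow_cos[of 3 ?a b] by simp
  show ?thesis using D unfolding d1 d3 .
qed

definition Cc where "Cc L u n t = (LINT x:{0..L}|lborel. u x t * cos (freq L * of_int n * x))"
definition Ss where "Ss L u n t = (LINT x:{0..L}|lborel. u x t * sin (freq L * of_int n * x))"
definition Bc where "Bc L u n t = (LINT x:{0..L}|lborel. (u x t)\<^sup>2 * cos (freq L * of_int n * x))"
definition Bs where "Bs L u n t = (LINT x:{0..L}|lborel. (u x t)\<^sup>2 * sin (freq L * of_int n * x))"

lemma int_lin2:
  fixes f g :: "real \<Rightarrow> real"
  assumes "set_integrable lborel A f" "set_integrable lborel A g"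
  shows "(LINT x:A|lborel. c1 * f x + c2 * g x) = c1 * (LINT x:A|lborel. f x) + c2 * (LINT x:A|lborel. g x)"
  using assms by (simp add: set_integral_add set_integrable_mult_right set_integral_mult_right)

lemma deriv_Cc:
  assumes sol: "kdv_solution L \<delta> u" and L: "L > 0"
  shows "(Cc L u n has_real_derivative (- (freq L * of_int n / 2) * Bs L u n t + \<delta>\<^sup>2 * (freq L * of_int n) ^ 3 * Ss L u n t)) (at t)"
proof -
  let ?a = "freq L * of_int n"
  have m: "(\<lambda>x. u x t) \<in> borel_measurable borel" and q: "set_integrable lborel {0..L} (\<lambda>x. (u x t)\<^sup>2)"
    using sol_sq[OF sol] by auto
  have sm: "(\<lambda>x. sin (?a * x)) \<in> borel_measurable borel" by (intro borel_measurable_continuous_onI continuous_intros)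
  have i1: "set_integrable lborel {0..L} (\<lambda>x. (u x t)\<^sup>2 * sin (?a * x))"
    by (rule real_int_sq_bounded[OF m q sm, of 1]) auto
  have i2: "set_integrable lborel {0..L} (\<lambda>x. u x t * sin (?a * x))"
    by (rule real_int_bounded[OF m q sm, of 1]) auto
  have D: "((\<lambda>s. LINT x:{0..L}|lborel. u x s * cos (?a * x + 0)) has_real_derivative
     (LINT x:{0..L}|lborel. (u x t)\<^sup>2 / 2 * (?a * cos (?a * x + (0 + pi / 2)))
        + \<delta>\<^sup>2 * u x t * (?a ^ 3 * cos (?a * x + (0 + 3 * pi / 2))))) (at t)"
    by (rule weak_cos[OF sol L])
  have e: "(LINT x:{0..L}|lborel. (u x t)\<^sup>2 / 2 * (?a * cos (?a * x + (0 + pi / 2)))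
        + \<delta>\<^sup>2 * u x t * (?a ^ 3 * cos (?a * x + (0 + 3 * pi / 2))))
      = (LINT x:{0..L}|lborel. (- (?a / 2)) * ((u x t)\<^sup>2 * sin (?a * x)) + (\<delta>\<^sup>2 * ?a ^ 3) * (u x t * sin (?a * x)))"
  proof -
    have c1: "cos (y + pi / 2) = - sin y" for y by (simp add: cos_add)
    have c3: "cos (y + 3 * pi / 2) = sin y" for y
    proof -
      have "y + 3 * pi / 2 = (y + pi / 2) + pi" by simp
      thus ?thesis by (simp only: cos_periodic_pi c1)
    qed
    show ?thesis by (simp only: add_0_left c1 c3) (simp add: algebra_simps)
  qed
  have "(LINT x:{0..L}|lborel. (- (?a / 2)) * ((u x t)\<^sup>2 * sin (?a * x)) + (\<delta>\<^sup>2 * ?a ^ 3) * (u x t * sin (?a * x)))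
      = - (?a / 2) * Bs L u n t + \<delta>\<^sup>2 * ?a ^ 3 * Ss L u n t"
    unfolding Bs_def Ss_def by (subst int_lin2[OF i1 i2]) (simp add: mult.assoc)
  moreover have "Cc L u n = (\<lambda>s. LINT x:{0..L}|lborel. u x s * cos (?a * x + 0))"
    by (rule ext) (simp add: Cc_def)
  ultimately show ?thesis using D e by simp
qed

lemma deriv_Ss:
  assumes sol: "kdv_solution L \<delta> u" and L: "L > 0"
  shows "(Ss L u n has_real_derivative ((freq L * of_int n / 2) * Bc L u n t - \<delta>\<^sup>2 * (freq L * of_int n) ^ 3 * Cc L u n t)) (at t)"
proof -
  let ?a = "freq L * of_int n"
  have m: "(\<lambda>x. u x t) \<in> borel_measurable borel" and q: "set_integrable lborel {0..L} (\<lambda>x. (u x t)\<^sup>2)"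
    using sol_sq[OF sol] by auto
  have cm: "(\<lambda>x. cos (?a * x)) \<in> borel_measurable borel" by (intro borel_measurable_continuous_onI continuous_intros)
  have i1: "set_integrable lborel {0..L} (\<lambda>x. (u x t)\<^sup>2 * cos (?a * x))"
    by (rule real_int_sq_bounded[OF m q cm, of 1]) auto
  have i2: "set_integrable lborel {0..L} (\<lambda>x. u x t * cos (?a * x))"
    by (rule real_int_bounded[OF m q cm, of 1]) auto
  have D: "((\<lambda>s. LINT x:{0..L}|lborel. u x s * cos (?a * x + (- pi / 2))) has_real_derivative
     (LINT x:{0..L}|lborel. (u x t)\<^sup>2 / 2 * (?a * cos (?a * x + (- pi / 2 + pi / 2)))
        + \<delta>\<^sup>2 * u x t * (?a ^ 3 * cos (?a * x + (- pi / 2 + 3 * pi / 2))))) (at t)"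
    by (rule weak_cos[OF sol L])
  have c0: "cos (y + (- pi / 2)) = sin y" for y by (simp add: cos_diff)
  have e: "(LINT x:{0..L}|lborel. (u x t)\<^sup>2 / 2 * (?a * cos (?a * x + (- pi / 2 + pi / 2)))
        + \<delta>\<^sup>2 * u x t * (?a ^ 3 * cos (?a * x + (- pi / 2 + 3 * pi / 2))))
      = (LINT x:{0..L}|lborel. (?a / 2) * ((u x t)\<^sup>2 * cos (?a * x)) + (- (\<delta>\<^sup>2 * ?a ^ 3)) * (u x t * cos (?a * x)))"
  proof -
    have h1: "- pi / 2 + pi / 2 = 0" and h3: "- pi / 2 + 3 * pi / 2 = pi" by simp_all
    show ?thesis by (simp only: h1 h3 add_0_right cos_periodic_pi) (simp add: algebra_simps)
  qed
  have "(LINT x:{0..L}|lborel. (?a / 2) * ((u x t)\<^sup>2 * cos (?a * x)) + (- (\<delta>\<^sup>2 * ?a ^ 3)) * (u x t * cos (?a * x)))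
      = (?a / 2) * Bc L u n t - \<delta>\<^sup>2 * ?a ^ 3 * Cc L u n t"
    unfolding Bc_def Cc_def by (subst int_lin2[OF i1 i2]) (simp add: mult.assoc)
  moreover have "Ss L u n = (\<lambda>s. LINT x:{0..L}|lborel. u x s * cos (?a * x + (- pi / 2)))"
    by (rule ext) (simp only: Ss_def c0)
  ultimately show ?thesis using D e by simp
qed

lemma ee_cos_sin: "ee L n x = complex_of_real (cos (freq L * of_int n * x)) + \<i> * complex_of_real (sin (freq L * of_int n * x))"
  unfolding ee_def exp_Euler cos_of_real sin_of_real ..

lemma cnj_ee_cos_sin: "cnj (ee L n x) = complex_of_real (cos (freq L * of_int n * x)) - \<i> * complex_of_real (sin (freq L * of_int n * x))"
  unfolding ee_cos_sin by simp

lemma mvt_bound: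
  fixes f f' :: "real \<Rightarrow> real"
  assumes D: "\<And>x. (f has_real_derivative f' x) (at x)" and M: "\<And>x. \<bar>x\<bar> \<le> \<bar>t\<bar> \<Longrightarrow> \<bar>f' x\<bar> \<le> M"
  shows "\<bar>f t - f 0\<bar> \<le> \<bar>t\<bar> * M"
proof (cases t "0::real" rule: linorder_cases)
  case less
  obtain z where z: "t < z" "z < 0" "f 0 - f t = (0 - t) * f' z"
    using MVT2[OF less, of f f'] D by blast
  have "\<bar>f' z\<bar> \<le> M" using z less by (intro M) auto
  thus ?thesis using z less by (simp add: abs_mult abs_minus_commute)
next
  case equal then show ?thesis using M[of 0] by simp
next
  case greater
  obtain z where z: "0 < z" "z < t" "f t - f 0 = (t - 0) * f' z"
    using MVT2[OF greater, of f f'] D by blast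
  have "\<bar>f' z\<bar> \<le> M" using z greater by (intro M) auto
  thus ?thesis using z greater by (simp add: abs_mult)
qed

lemma sqi_sol:
  assumes sol: "kdv_solution L \<delta> u"
  shows "sqi {0..L} (\<lambda>x. complex_of_real (u x t))"
  using sol_sq[OF sol, of t] by (simp add: sqi_of_real)

lemma sqi_cos: "sqi {a..b} (\<lambda>x. complex_of_real (cos (c * x)))"
  by (rule sqi_cont) (intro continuous_intros)

lemma sqi_sin: "sqi {a..b} (\<lambda>x. complex_of_real (sin (c * x)))"
  by (rule sqi_cont) (intro continuous_intros)

lemma cf_CS:
  assumes sol: "kdv_solution L \<delta> u" and L: "L > 0"
  shows "complex_of_real L * cf L (\<lambda>x. complex_of_real (u x t)) n = complex_of_real (Cc L u n t) - \<i> * complex_of_real (Ss L u n t)"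
proof -
  let ?a = "freq L * of_int n"
  have F: "sqi {0..L} (\<lambda>x. complex_of_real (u x t))" by (rule sqi_sol[OF sol])
  have i1: "set_integrable lborel {0..L} (\<lambda>x. complex_of_real (u x t) * complex_of_real (cos (?a * x)))"
    by (rule set_integrable_prod[OF F sqi_cos]) auto
  have i2: "set_integrable lborel {0..L} (\<lambda>x. \<i> * (complex_of_real (u x t) * complex_of_real (sin (?a * x))))"
    by (rule set_integrable_mult_right, rule set_integrable_prod[OF F sqi_sin]) auto
  have "(LINT x:{0..L}|lborel. complex_of_real (u x t) * cnj (ee L n x))
      = (LINT x:{0..L}|lborel. complex_of_real (u x t) * complex_of_real (cos (?a * x)) - \<i> * (complex_of_real (u x t) * complex_of_real (sin (?a * x))))"
    unfolding cnj_ee_cos_sin by (simp add: algebra_simps)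
  also have "\<dots> = (LINT x:{0..L}|lborel. complex_of_real (u x t * cos (?a * x))) - \<i> * (LINT x:{0..L}|lborel. complex_of_real (u x t * sin (?a * x)))"
    using set_integral_diff(2)[OF i1 i2] by (simp add: set_integral_mult_right)
  also have "\<dots> = complex_of_real (Cc L u n t) - \<i> * complex_of_real (Ss L u n t)"
    unfolding Cc_def Ss_def set_integral_complex_of_real ..
  finally show ?thesis using L by (simp add: cf_def)
qed

lemma B_CS:
  assumes sol: "kdv_solution L \<delta> u" and L: "L > 0"
  shows "(LINT x:{0..L}|lborel. (complex_of_real (u x t))\<^sup>2 * ee L n x) = complex_of_real (Bc L u n t) + \<i> * complex_of_real (Bs L u n t)"
proof -
  let ?a = "freq L * of_int n"
  have F: "sqi {0..L} (\<lambda>x. complex_of_real (u x t))" by (rule sqi_sol[OF sol])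
  have Fc: "sqi {0..L} (\<lambda>x. complex_of_real (cos (?a * x)) * complex_of_real (u x t))"
    by (rule sqi_mult_bounded[OF F, of _ 1]) (auto intro: borel_measurable_continuous_onI continuous_intros)
  have Fs: "sqi {0..L} (\<lambda>x. complex_of_real (sin (?a * x)) * complex_of_real (u x t))"
    by (rule sqi_mult_bounded[OF F, of _ 1]) (auto intro: borel_measurable_continuous_onI continuous_intros)
  have i1: "set_integrable lborel {0..L} (\<lambda>x. complex_of_real ((u x t)\<^sup>2 * cos (?a * x)))"
    using set_integrable_prod[OF F Fc] by (simp add: power2_eq_square algebra_simps)
  have i2: "set_integrable lborel {0..L} (\<lambda>x. \<i> * complex_of_real ((u x t)\<^sup>2 * sin (?a * x)))"
    using set_integrable_mult_right[OF set_integrable_prod[OF F Fs], of \<i>] by (simp add: power2_eq_square algebra_simps)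
  have "(LINT x:{0..L}|lborel. (complex_of_real (u x t))\<^sup>2 * ee L n x)
      = (LINT x:{0..L}|lborel. complex_of_real ((u x t)\<^sup>2 * cos (?a * x)) + \<i> * complex_of_real ((u x t)\<^sup>2 * sin (?a * x)))"
    unfolding ee_cos_sin by (simp add: algebra_simps)
  also have "\<dots> = complex_of_real (Bc L u n t) + \<i> * complex_of_real (Bs L u n t)"
    using set_integral_add(2)[OF i1 i2] unfolding Bc_def Bs_def set_integral_complex_of_real[symmetric]
    by (simp add: set_integral_mult_right)
  finally show ?thesis .
qed


definition SN where "SN L u N t = (\<Sum>n\<in>{-int N..int N}. (Cc L u n t * Cc L u n t + Ss L u n t * Ss L u n t) / L\<^sup>2)"

lemma SN_eq:
  assumes sol: "kdv_solution L \<delta> u" and L: "L > 0"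
  shows "L * SN L u N t = L * (\<Sum>n\<in>{-int N..int N}. (cmod (cf L (\<lambda>x. complex_of_real (u x t)) n))\<^sup>2)"
proof -
  have "(cmod (cf L (\<lambda>x. complex_of_real (u x t)) n))\<^sup>2 = (Cc L u n t * Cc L u n t + Ss L u n t * Ss L u n t) / L\<^sup>2" for n
  proof -
    have "cf L (\<lambda>x. complex_of_real (u x t)) n = (complex_of_real (Cc L u n t) - \<i> * complex_of_real (Ss L u n t)) / complex_of_real L"
      using cf_CS[OF sol L, of t n] L by (simp add: field_simps)
    moreover have "(cmod (complex_of_real (Cc L u n t) - \<i> * complex_of_real (Ss L u n t)))\<^sup>2 = Cc L u n t * Cc L u n t + Ss L u n t * Ss L u n t"
      by (simp only: cmod_power2) (simp add: power2_eq_square)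
    ultimately show ?thesis using L by (simp add: norm_divide power_divide)
  qed
  thus ?thesis unfolding SN_def by simp
qed

lemma SN_deriv:
  assumes sol: "kdv_solution L \<delta> u" and L: "L > 0"
  shows "(SN L u N has_real_derivative
     (\<Sum>n\<in>{-int N..int N}. (freq L * of_int n / L\<^sup>2) * (Ss L u n t * Bc L u n t - Cc L u n t * Bs L u n t))) (at t)"
proof -
  let ?C' = "\<lambda>n. - (freq L * of_int n / 2) * Bs L u n t + \<delta>\<^sup>2 * (freq L * of_int n) ^ 3 * Ss L u n t"
  let ?S' = "\<lambda>n. (freq L * of_int n / 2) * Bc L u n t - \<delta>\<^sup>2 * (freq L * of_int n) ^ 3 * Cc L u n t"
  have "((\<lambda>t. \<Sum>n\<in>{-int N..int N}. (Cc L u n t * Cc L u n t + Ss L u n t * Ss L u n t) / L\<^sup>2) has_real_derivative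
      (\<Sum>n\<in>{-int N..int N}. ((Cc L u n t * ?C' n + ?C' n * Cc L u n t) + (Ss L u n t * ?S' n + ?S' n * Ss L u n t)) / L\<^sup>2)) (at t)"
    by (intro DERIV_sum DERIV_cdivide DERIV_add DERIV_mult' deriv_Cc[OF sol L] deriv_Ss[OF sol L])
  moreover have "(\<Sum>n\<in>{-int N..int N}. ((Cc L u n t * ?C' n + ?C' n * Cc L u n t) + (Ss L u n t * ?S' n + ?S' n * Ss L u n t)) / L\<^sup>2)
      = (\<Sum>n\<in>{-int N..int N}. (freq L * of_int n / L\<^sup>2) * (Ss L u n t * Bc L u n t - Cc L u n t * Bs L u n t))"
    using L by (intro sum.cong refl) (simp add: field_simps)
  ultimately show ?thesis unfolding SN_def[abs_def] by simp
qed

lemma Re_identity: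
  assumes sol: "kdv_solution L \<delta> u" and L: "L > 0"
  shows "Re (LINT x:{0..L}|lborel. (complex_of_real (u x t))\<^sup>2 * tp L N (dc L (cf L (\<lambda>x. complex_of_real (u x t)))) x) / L
    = (\<Sum>n\<in>{-int N..int N}. (freq L * of_int n / L\<^sup>2) * (Ss L u n t * Bc L u n t - Cc L u n t * Bs L u n t))"
proof -
  let ?F = "\<lambda>x. complex_of_real (u x t)"
  let ?a = "cf L ?F"
  have F: "sqi {0..L} ?F" by (rule sqi_sol[OF sol])
  have int: "set_integrable lborel {0..L} (\<lambda>x. dc L ?a n * ((?F x)\<^sup>2 * ee L n x))" for n
  proof -
    have "sqi {0..L} (\<lambda>x. ee L n x * ?F x)" by (rule sqi_mult_bounded[OF F ee_measurable, where C=1]) auto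
    from set_integrable_prod[OF F this] show ?thesis
      by (intro set_integrable_mult_right) (simp add: power2_eq_square algebra_simps)
  qed
  have "(LINT x:{0..L}|lborel. (?F x)\<^sup>2 * tp L N (dc L ?a) x)
      = (LINT x:{0..L}|lborel. (\<Sum>n\<in>{-int N..int N}. dc L ?a n * ((?F x)\<^sup>2 * ee L n x)))"
    unfolding tp_def by (simp add: sum_distrib_left algebra_simps)
  also have "\<dots> = (\<Sum>n\<in>{-int N..int N}. dc L ?a n * (LINT x:{0..L}|lborel. (?F x)\<^sup>2 * ee L n x))"
    by (subst set_integral_sum) (auto intro: int simp: set_integral_mult_right)
  also have "\<dots> = (\<Sum>n\<in>{-int N..int N}. dc L ?a n * (complex_of_real (Bc L u n t) + \<i> * complex_of_real (Bs L u n t)))"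
    by (simp add: B_CS[OF sol L])
  finally have e: "(LINT x:{0..L}|lborel. (?F x)\<^sup>2 * tp L N (dc L ?a) x) = \<dots>" .
  have "Re (dc L ?a n * (complex_of_real (Bc L u n t) + \<i> * complex_of_real (Bs L u n t))) / L
      = (freq L * of_int n / L\<^sup>2) * (Ss L u n t * Bc L u n t - Cc L u n t * Bs L u n t)" for n
  proof -
    have an: "?a n = (complex_of_real (Cc L u n t) - \<i> * complex_of_real (Ss L u n t)) / complex_of_real L"
      using cf_CS[OF sol L, of t n] L by (simp add: field_simps)
    show ?thesis unfolding dc_def an using L by (simp add: field_simps power2_eq_square)
  qed
  thus ?thesis unfolding e Re_sum sum_divide_distrib by simp
qed

lemma parseval_sol:
  assumes sol: "kdv_solution L \<delta> u" and L: "L > 0"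
  shows "(\<lambda>N. L * SN L u N t) \<longlonglongrightarrow> (LINT x:{0..L}|lborel. (u x t)\<^sup>2)"
proof -
  have H: "H2per L (\<lambda>x. u x t)" using sol by (simp add: kdv_solution_def)
  then obtain p where h: "h2approx L (\<lambda>x. u x t) p" and m: "(\<lambda>x. u x t) \<in> borel_measurable borel"
    unfolding H2per_def by blast
  show ?thesis unfolding SN_eq[OF sol L] by (rule parseval[OF L h m])
qed

lemma conserve:
  assumes sol: "kdv_solution L \<delta> u" and L: "L > 0"
  shows "(LINT x:{0..L}|lborel. (u x t)\<^sup>2) = (LINT x:{0..L}|lborel. (u x 0)\<^sup>2)"
proof -
  obtain B where B: "\<forall>s\<in>{-\<bar>t\<bar>..\<bar>t\<bar>}. \<exists>p. h2approx L (\<lambda>x. u x s) p \<and> (\<forall>m. h2norm L (p m) \<le> B)"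
    using sol unfolding kdv_solution_def by blast
  define X where "X = (B\<^sup>2 / L + 3 / (freq L)\<^sup>2) * (B\<^sup>2 / (freq L) ^ 4 + 4 * B\<^sup>2)"
  define d where "d N s = (\<Sum>n\<in>{-int N..int N}. (freq L * of_int n / L\<^sup>2) * (Ss L u n s * Bc L u n s - Cc L u n s * Bs L u n s))" for N s
  have dbound: "\<bar>d N s\<bar> \<le> X / (2 * real N) / L" if N: "N \<ge> 1" and s: "\<bar>s\<bar> \<le> \<bar>t\<bar>" for N s
  proof -
    obtain p where h: "h2approx L (\<lambda>x. u x s) p" and pB: "\<forall>m. h2norm L (p m) \<le> B"
    proof -
      have "s \<in> {-\<bar>t\<bar>..\<bar>t\<bar>}" using s by auto
      with B have "\<exists>p. h2approx L (\<lambda>x. u x s) p \<and> (\<forall>m. h2norm L (p m) \<le> B)" by (rule bspec)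
      thus ?thesis using that by blast
    qed
    have m: "(\<lambda>x. u x s) \<in> borel_measurable borel" using sol_sq[OF sol] by auto
    let ?z = "LINT x:{0..L}|lborel. (complex_of_real (u x s))\<^sup>2 * tp L N (dc L (cf L (\<lambda>x. complex_of_real (u x s)))) x"
    have "d N s = Re ?z / L" unfolding d_def by (rule Re_identity[OF sol L, symmetric])
    hence "\<bar>d N s\<bar> = \<bar>Re ?z\<bar> / L" using L by simp
    also have "\<dots> \<le> norm ?z / L" using L by (intro divide_right_mono abs_Re_le_cmod) auto
    also have "\<dots> \<le> X / (2 * real N) / L"
      using R_bound[OF L h m, of B N] pB N L unfolding X_def by (intro divide_right_mono) auto
    finally show ?thesis .
  qed
  have diff: "\<bar>L * SN L u N t - L * SN L u N 0\<bar> \<le> \<bar>t\<bar> * X / (2 * real N)" if N: "N \<ge> 1" for N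
  proof -
    have "\<bar>SN L u N t - SN L u N 0\<bar> \<le> \<bar>t\<bar> * (X / (2 * real N) / L)"
    proof (rule mvt_bound)
      show "(SN L u N has_real_derivative d N x) (at x)" for x unfolding d_def by (rule SN_deriv[OF sol L])
      show "\<bar>d N x\<bar> \<le> X / (2 * real N) / L" if "\<bar>x\<bar> \<le> \<bar>t\<bar>" for x by (rule dbound[OF N that])
    qed
    hence "L * \<bar>SN L u N t - SN L u N 0\<bar> \<le> L * (\<bar>t\<bar> * (X / (2 * real N) / L))"
      using L by (intro mult_left_mono) auto
    thus ?thesis using L by (simp add: abs_mult right_diff_distrib[symmetric])
  qed
  have lim1: "(\<lambda>N. L * SN L u N t - L * SN L u N 0) \<longlonglongrightarrow> (LINT x:{0..L}|lborel. (u x t)\<^sup>2) - (LINT x:{0..L}|lborel. (u x 0)\<^sup>2)"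
    by (intro tendsto_diff parseval_sol[OF sol L])
  have "(\<lambda>N. \<bar>t\<bar> * X / 2 * inverse (real N)) \<longlonglongrightarrow> \<bar>t\<bar> * X / 2 * 0"
    by (intro tendsto_mult tendsto_const tendsto_inverse_0_at_top filterlim_real_sequentially)
  hence z: "(\<lambda>N. \<bar>t\<bar> * X / (2 * real N)) \<longlonglongrightarrow> 0" by (simp add: field_simps)
  have lim2: "(\<lambda>N. L * SN L u N t - L * SN L u N 0) \<longlonglongrightarrow> 0"
  proof (rule Lim_null_comparison[OF _ z])
    show "\<forall>\<^sub>F N in sequentially. norm (L * SN L u N t - L * SN L u N 0) \<le> \<bar>t\<bar> * X / (2 * real N)"
      using eventually_ge_at_top[of 1] by eventually_elim (use diff in auto)
  qed
  from LIMSEQ_unique[OF lim1 lim2] show ?thesis by simp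
qed

lemma int_translate:
  fixes h :: "real \<Rightarrow> 'a::{banach, second_countable_topology}"
  shows "(LINT x:{a..b}|lborel. h (x + s)) = (LINT x:{a+s..b+s}|lborel. h x)"
proof -
  have "(LINT x:{a+s..b+s}|lborel. h x) = (LINT x|lborel. indicator {a+s..b+s} (s + 1 * x) *\<^sub>R h (s + 1 * x))"
    unfolding set_lebesgue_integral_def
    using lborel_integral_real_affine[of 1 "\<lambda>y. indicator {a+s..b+s} y *\<^sub>R h y" s] by simp
  also have "\<dots> = (LINT x|lborel. indicator {a..b} x *\<^sub>R h (x + s))"
    by (intro Bochner_Integration.integral_cong refl) (auto simp: indicator_def add.commute)
  finally show ?thesis unfolding set_lebesgue_integral_def by simp
qed

lemma int_split:
  fixes h :: "real \<Rightarrow> 'a::{banach, second_countable_topology}"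
  assumes ab: "a \<le> b" and bc: "b \<le> c" and i: "set_integrable lborel {a..c} h"
  shows "(LINT x:{a..b}|lborel. h x) + (LINT x:{b..c}|lborel. h x) = (LINT x:{a..c}|lborel. h x)"
proof -
  have i': "set_integrable lborel {a<..<c} h" by (rule set_integrable_subset[OF i]) auto
  have m1: "min (ereal a) (min (ereal b) (ereal c)) = ereal a" using ab bc by simp
  have m2: "max (ereal a) (max (ereal b) (ereal c)) = ereal c" using ab bc by simp
  have I: "interval_lebesgue_integrable lborel (min (ereal a) (min (ereal b) (ereal c))) (max (ereal a) (max (ereal b) (ereal c))) h"
    unfolding m1 m2 interval_lebesgue_integrable_def using ab bc i' by simp
  have "(LBINT x=a..b. h x) + (LBINT x=b..c. h x) = (LBINT x=a..c. h x)"
    by (rule interval_integral_sum[OF I])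
  thus ?thesis using ab bc by (simp add: interval_integral_Icc)
qed

lemma per_shift:
  fixes h :: "real \<Rightarrow> 'a::{banach, second_countable_topology}"
  assumes L: "L > 0" and per: "AE x in lborel. h (x + L) = h x"
    and hm: "h \<in> borel_measurable borel"
    and int: "\<And>a. set_integrable lborel {a..a+L} h" and c: "\<bar>c\<bar> \<le> L"
  shows "(LINT x:{c..c+L}|lborel. h x) = (LINT x:{0..L}|lborel. h x)"
proof -
  have shL: "(LINT x:{a..b}|lborel. h (x + L)) = (LINT x:{a..b}|lborel. h x)" for a b
  proof (rule set_lebesgue_integral_cong_AE)
    have [measurable]: "h \<in> borel_measurable borel" by (rule hm)
    show "(\<lambda>x. h (x + L)) \<in> borel_measurable lborel" by simp
    show "h \<in> borel_measurable lborel" by simp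
    show "AE x\<in>{a..b} in lborel. h (x + L) = h x" by (rule AE_mp[OF per], rule AE_I2) auto
  qed simp
  have pos: "(LINT x:{c..c+L}|lborel. h x) = (LINT x:{0..L}|lborel. h x)" if c0: "0 \<le> c" "c \<le> L" for c
  proof -
    have i2: "set_integrable lborel {0..2*L} h"
    proof -
      have "set_integrable lborel {0..L} h" using int[of 0] by simp
      moreover have "set_integrable lborel {L..2*L} h" using int[of L] by (simp only: mult_2)
      ultimately have "set_integrable lborel ({0..L} \<union> {L..2*L}) h" by (rule set_integrable_Un) auto
      moreover have "{0..L} \<union> {L..2*L} = {0..2*L}" using L by auto
      ultimately show ?thesis by simp
    qed
    have sub: "set_integrable lborel {a..b} h" if "0 \<le> a" "b \<le> 2*L" for a b
      by (rule set_integrable_subset[OF i2]) (use that in auto)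
    have "(LINT x:{c..c+L}|lborel. h x) = (LINT x:{c..L}|lborel. h x) + (LINT x:{L..c+L}|lborel. h x)"
      by (rule int_split[symmetric]) (use c0 L in \<open>auto intro: sub\<close>)
    also have "(LINT x:{L..c+L}|lborel. h x) = (LINT x:{0..c}|lborel. h (x + L))"
      using int_translate[where h=h and a=0 and b=c and s=L] by simp
    also have "\<dots> = (LINT x:{0..c}|lborel. h x)" by (rule shL)
    also have "(LINT x:{c..L}|lborel. h x) + (LINT x:{0..c}|lborel. h x) = (LINT x:{0..L}|lborel. h x)"
      using int_split[where a=0 and b=c and c=L and h=h, OF c0(1) c0(2) sub[of 0 L]] L by (simp add: add.commute)
    finally show ?thesis .
  qed
  show ?thesis
  proof (cases "0 \<le> c")
    case True then show ?thesis using pos c by auto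
  next
    case False
    have "(LINT x:{c..c+L}|lborel. h x) = (LINT x:{c..c+L}|lborel. h (x + L))" by (rule shL[symmetric])
    also have "\<dots> = (LINT x:{(c+L)..(c+L)+L}|lborel. h x)" by (simp add: int_translate)
    also have "\<dots> = (LINT x:{0..L}|lborel. h x)" using False c by (intro pos) auto
    finally show ?thesis .
  qed
qed

lemma tp_periodic: "L > 0 \<Longrightarrow> tp L N c (x + L) = tp L N c x"
  unfolding tp_def by (simp add: ee_periodic)

lemma trig_poly_periodic: "trig_poly L q \<Longrightarrow> L > 0 \<Longrightarrow> q (x + L) = q x"
  using trig_poly_tp tp_periodic by metis

lemma set_integrable_translate:
  fixes h :: "real \<Rightarrow> 'a::{banach, second_countable_topology}"
  shows "set_integrable lborel {a..b} (\<lambda>x. h (x + s)) \<longleftrightarrow> set_integrable lborel {a+s..b+s} h"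
proof -
  have "integrable lborel (\<lambda>x. indicator {a+s..b+s} (s + 1 * x) *\<^sub>R h (s + 1 * x)) \<longleftrightarrow> integrable lborel (\<lambda>x. indicator {a+s..b+s} x *\<^sub>R h x)"
    by (rule lborel_integrable_real_affine_iff) simp
  moreover have "(\<lambda>x. indicator {a+s..b+s} (s + 1 * x) *\<^sub>R h (s + 1 * x)) = (\<lambda>x. indicator {a..b} x *\<^sub>R h (x + s))"
    by (rule ext) (auto simp: indicator_def add.commute)
  ultimately show ?thesis unfolding set_integrable_def by simp
qed

lemma h2_periodic_window:
  assumes L: "L > 0" and h: "h2approx L f p" and fm: "f \<in> borel_measurable borel"
  shows "AE x in lborel. x \<in> {a..a+L} \<longrightarrow> f (x + L) = f x"
proof -
  have tp: "\<And>m. trig_poly L (p m)" using h by (simp add: h2approx_def)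
  define D where "D x = (f (x + L) - f x)\<^sup>2" for x
  have [measurable]: "f \<in> borel_measurable borel" by (rule fm)
  have Dm: "D \<in> borel_measurable borel" unfolding D_def by measurable
  have s1: "sqi {a..a+L} (\<lambda>x. complex_of_real (f x))" by (rule h2_sqi[OF h fm])
  have s2: "sqi {a+L..a+L+L} (\<lambda>x. complex_of_real (f x))" by (rule h2_sqi[OF h fm])
  have Dint: "set_integrable lborel {a..a+L} D"
  proof -
    have "set_integrable lborel {a..a+L} (\<lambda>x. (f (x + L))\<^sup>2)"
      using s2 set_integrable_translate[where h="\<lambda>x. (f x)\<^sup>2" and a=a and b="a+L" and s=L] by (simp add: sqi_of_real)
    moreover have "set_integrable lborel {a..a+L} (\<lambda>x. (f x)\<^sup>2)" using s1 by (simp add: sqi_of_real)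
    ultimately have "set_integrable lborel {a..a+L} (\<lambda>x. 2 * (f (x + L))\<^sup>2 + 2 * (f x)\<^sup>2)"
      by (intro set_integral_add set_integrable_mult_right)
    thus ?thesis
    proof (rule set_integrable_bound)
      show "set_borel_measurable lborel {a..a+L} D" using Dm by (intro sbm) auto
      show "AE x\<in>{a..a+L} in lborel. norm (D x) \<le> norm (2 * (f (x + L))\<^sup>2 + 2 * (f x)\<^sup>2)"
      proof (rule AE_I2, rule impI)
        fix x
        have "D x \<le> 2 * (f (x + L))\<^sup>2 + 2 * (f x)\<^sup>2"
          unfolding D_def using sum_squares_bound[of "- f (x + L)" "f x"] by (simp add: power2_diff)
        thus "norm (D x) \<le> norm (2 * (f (x + L))\<^sup>2 + 2 * (f x)\<^sup>2)" by (simp add: D_def)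
      qed
    qed
  qed
  define e where "e m b = (LINT x:{b..b+L}|lborel. (cmod (p m x - complex_of_real (f x)))\<^sup>2)" for m b
  have lim1: "(\<lambda>m. e m (a + L)) \<longlonglongrightarrow> 0" unfolding e_def by (rule h2approx_window(2)[OF h fm])
  have lim2: "(\<lambda>m. e m a) \<longlonglongrightarrow> 0" unfolding e_def by (rule h2approx_window(2)[OF h fm])
  have ev: "eventually (\<lambda>m. set_integrable lborel {a+L..a+L+L} (\<lambda>x. (cmod (p m x - complex_of_real (f x)))\<^sup>2)
         \<and> set_integrable lborel {a..a+L} (\<lambda>x. (cmod (p m x - complex_of_real (f x)))\<^sup>2)) sequentially"
    by (intro eventually_conj h2approx_window(1)[OF h fm])
  have bound: "(LINT x:{a..a+L}|lborel. D x) \<le> 2 * e m (a + L) + 2 * e m a"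
    if im: "set_integrable lborel {a+L..a+L+L} (\<lambda>x. (cmod (p m x - complex_of_real (f x)))\<^sup>2)"
       "set_integrable lborel {a..a+L} (\<lambda>x. (cmod (p m x - complex_of_real (f x)))\<^sup>2)" for m
  proof -
    have i1: "set_integrable lborel {a..a+L} (\<lambda>x. (cmod (p m (x + L) - complex_of_real (f (x + L))))\<^sup>2)"
      using im(1) unfolding set_integrable_translate[where h="\<lambda>x. (cmod (p m x - complex_of_real (f x)))\<^sup>2"]
      by (simp add: add.commute add.left_commute)
    have "(LINT x:{a..a+L}|lborel. D x) \<le> (LINT x:{a..a+L}|lborel. 2 * (cmod (p m (x + L) - complex_of_real (f (x + L))))\<^sup>2 + 2 * (cmod (p m x - complex_of_real (f x)))\<^sup>2)"
    proof (rule set_integral_mono[OF Dint])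
      show "set_integrable lborel {a..a+L} (\<lambda>x. 2 * (cmod (p m (x + L) - complex_of_real (f (x + L))))\<^sup>2 + 2 * (cmod (p m x - complex_of_real (f x)))\<^sup>2)"
        using i1 im(2) by (intro set_integral_add set_integrable_mult_right)
      fix x
      have per: "p m (x + L) = p m x" by (rule trig_poly_periodic[OF tp L])
      have e: "complex_of_real (f (x + L) - f x) = (p m x - complex_of_real (f x)) - (p m (x + L) - complex_of_real (f (x + L)))"
        using per by simp
      have "D x = (cmod (complex_of_real (f (x + L) - f x)))\<^sup>2" unfolding D_def norm_of_real by simp
      also have "\<dots> = (cmod ((p m x - complex_of_real (f x)) - (p m (x + L) - complex_of_real (f (x + L)))))\<^sup>2"
        unfolding e ..
      also have "\<dots> \<le> (cmod (p m (x + L) - complex_of_real (f (x + L))) + cmod (p m x - complex_of_real (f x)))\<^sup>2"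
        by (intro power_mono) (auto intro: order_trans[OF norm_triangle_ineq4] simp: add.commute)
      also have "\<dots> \<le> 2 * (cmod (p m (x + L) - complex_of_real (f (x + L))))\<^sup>2 + 2 * (cmod (p m x - complex_of_real (f x)))\<^sup>2"
        using sum_squares_bound[of "cmod (p m (x + L) - complex_of_real (f (x + L)))" "cmod (p m x - complex_of_real (f x))"]
        by (simp add: power2_sum)
      finally show "D x \<le> 2 * (cmod (p m (x + L) - complex_of_real (f (x + L))))\<^sup>2 + 2 * (cmod (p m x - complex_of_real (f x)))\<^sup>2" .
    qed
    also have "\<dots> = 2 * (LINT x:{a..a+L}|lborel. (cmod (p m (x + L) - complex_of_real (f (x + L))))\<^sup>2) + 2 * e m a"
      unfolding e_def using i1 im(2) by (simp add: set_integral_add set_integrable_mult_right set_integral_mult_right)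
    also have "(LINT x:{a..a+L}|lborel. (cmod (p m (x + L) - complex_of_real (f (x + L))))\<^sup>2) = e m (a + L)"
      unfolding e_def using int_translate[where h="\<lambda>x. (cmod (p m x - complex_of_real (f x)))\<^sup>2" and a=a and b="a+L" and s=L]
      by (simp add: add.commute add.left_commute)
    finally show ?thesis .
  qed
  have lim3: "(\<lambda>m. 2 * e m (a + L) + 2 * e m a) \<longlonglongrightarrow> 2 * 0 + 2 * 0"
    by (intro tendsto_add tendsto_mult tendsto_const lim1 lim2)
  have "(LINT x:{a..a+L}|lborel. D x) \<le> 0"
    using LIMSEQ_le_const[OF lim3, of "LINT x:{a..a+L}|lborel. D x"] ev bound
    by (simp add: eventually_sequentially) (meson order_refl)
  moreover have "0 \<le> (LINT x:{a..a+L}|lborel. D x)" by (rule set_integral_nonneg') (simp add: D_def)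
  ultimately have z: "(LINT x|lborel. indicator {a..a+L} x *\<^sub>R D x) = 0" unfolding set_lebesgue_integral_def by simp
  have "AE x in lborel. indicator {a..a+L} x *\<^sub>R D x = 0"
    using integral_nonneg_eq_0_iff_AE[OF Dint[unfolded set_integrable_def]] z by (simp add: D_def indicator_def)
  thus ?thesis by (rule AE_mp) (auto intro!: AE_I2 simp: D_def indicator_def)
qed

lemma h2_periodic:
  assumes L: "L > 0" and h: "h2approx L f p" and fm: "f \<in> borel_measurable borel"
  shows "AE x in lborel. f (x + L) = f x"
proof -
  have "AE x in lborel. \<forall>k::int. x \<in> {real_of_int k * L..real_of_int k * L + L} \<longrightarrow> f (x + L) = f x"
    unfolding AE_all_countable by (intro allI h2_periodic_window[OF L h fm])
  thus ?thesis
  proof (rule AE_mp, intro AE_I2 impI)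
    fix x assume a: "\<forall>k::int. x \<in> {real_of_int k * L..real_of_int k * L + L} \<longrightarrow> f (x + L) = f x"
    let ?k = "\<lfloor>x / L\<rfloor>"
    have k1: "real_of_int ?k \<le> x / L" and k2: "x / L < real_of_int ?k + 1" by linarith+
    have "real_of_int ?k * L \<le> x / L * L" using mult_right_mono[OF k1, of L] L by simp
    hence "real_of_int ?k * L \<le> x" using L by simp
    moreover have "x / L * L \<le> (real_of_int ?k + 1) * L" using mult_right_mono[OF less_imp_le[OF k2], of L] L by simp
    hence "x \<le> real_of_int ?k * L + L" using L by (simp add: distrib_right)
    ultimately have "x \<in> {real_of_int ?k * L..real_of_int ?k * L + L}" by simp
    thus "f (x + L) = f x" using a by blast
  qed
qed

lemma h2per_periodic: "L > 0 \<Longrightarrow> H2per L f \<Longrightarrow> AE x in lborel. f (x + L) = f x"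
  unfolding H2per_def using h2_periodic by blast

lemma trig_poly_shift: "trig_poly L q \<Longrightarrow> trig_poly L (\<lambda>x. q (x + c))"
proof -
  assume "trig_poly L q"
  then obtain N a where q: "q = tp L N a" using trig_poly_tp by blast
  have "(\<lambda>x. q (x + c)) = tp L N (\<lambda>n. a n * ee L n c)" unfolding q by (rule ext) (rule tp_shift)
  thus ?thesis by (simp add: tp_trig_poly)
qed

lemma tp_diff: "(\<lambda>x. tp L N a x - tp L N b x) = tp L N (\<lambda>n. a n - b n)"
  unfolding tp_def by (rule ext) (simp add: sum_subtractf left_diff_distrib)

lemma trig_poly_diff:
  assumes "trig_poly L q1" "trig_poly L q2" shows "trig_poly L (\<lambda>x. q1 x - q2 x)"
proof -
  obtain N1 a where q1: "q1 = tp L N1 a" using trig_poly_tp assms(1) by blast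
  obtain N2 b where q2: "q2 = tp L N2 b" using trig_poly_tp assms(2) by blast
  let ?N = "max N1 N2"
  have "q1 = tp L ?N (\<lambda>n. if \<bar>n\<bar> \<le> int N1 then a n else 0)" unfolding q1 by (rule tp_extend) simp
  moreover have "q2 = tp L ?N (\<lambda>n. if \<bar>n\<bar> \<le> int N2 then b n else 0)" unfolding q2 by (rule tp_extend) simp
  ultimately have "(\<lambda>x. q1 x - q2 x) = tp L ?N (\<lambda>n. (if \<bar>n\<bar> \<le> int N1 then a n else 0) - (if \<bar>n\<bar> \<le> int N2 then b n else 0))"
    using tp_diff by metis
  thus ?thesis by (simp add: tp_trig_poly)
qed

lemma h2norm_shift:
  assumes tp: "trig_poly L q" and L: "L > 0"
  shows "h2norm L (\<lambda>x. q (x + c)) = h2norm L q"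
proof -
  obtain N a where q: "q = tp L N a" using trig_poly_tp tp by blast
  have e: "(\<lambda>x. q (x + c)) = tp L N (\<lambda>n. a n * ee L n c)" unfolding q by (rule ext) (rule tp_shift)
  show ?thesis unfolding e unfolding q h2norm_tp[OF L]
    by (simp add: norm_mult mult.assoc[symmetric])
qed

lemma nn_translate:
  fixes g :: "real \<Rightarrow> ennreal"
  assumes [measurable]: "g \<in> borel_measurable borel"
  shows "(\<integral>\<^sup>+ x. g (x + c) * indicator {a..b} x \<partial>lborel) = (\<integral>\<^sup>+ y. g y * indicator {a+c..b+c} y \<partial>lborel)"
proof -
  have "(\<integral>\<^sup>+ y. g y * indicator {a+c..b+c} y \<partial>lborel) = ennreal \<bar>1\<bar> * (\<integral>\<^sup>+ x. g (c + 1 * x) * indicator {a+c..b+c} (c + 1 * x) \<partial>lborel)"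
    by (rule nn_integral_real_affine) auto
  also have "\<dots> = (\<integral>\<^sup>+ x. g (x + c) * indicator {a..b} x \<partial>lborel)"
    by (simp add: add.commute indicator_def)
  finally show ?thesis by simp
qed

lemma h2approx_shift:
  assumes h: "h2approx L f p" and fm: "f \<in> borel_measurable borel" and L: "L > 0"
  shows "h2approx L (\<lambda>x. f (x + c)) (\<lambda>m x. p m (x + c))"
  unfolding h2approx_def
proof (intro conjI allI impI)
  have tp: "\<And>m. trig_poly L (p m)" using h by (simp add: h2approx_def)
  show "trig_poly L (\<lambda>x. p m (x + c))" for m by (rule trig_poly_shift[OF tp])
  show "\<exists>N. \<forall>m\<ge>N. \<forall>n\<ge>N. h2norm L (\<lambda>x. p m (x + c) - p n (x + c)) < e" if e: "e > 0" for e
  proof -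
    obtain N where N: "\<forall>m\<ge>N. \<forall>n\<ge>N. h2norm L (\<lambda>x. p m x - p n x) < e"
      using h e unfolding h2approx_def by blast
    have "h2norm L (\<lambda>x. p m (x + c) - p n (x + c)) = h2norm L (\<lambda>x. p m x - p n x)" for m n
      using h2norm_shift[OF trig_poly_diff[OF tp[of m] tp[of n]] L, of c] by simp
    thus ?thesis using N by auto
  qed
  show "(\<lambda>m. \<integral>\<^sup>+ x. ennreal ((cmod (p m (x + c) - complex_of_real (f (x + c))))\<^sup>2) * indicator {a..a + L} x \<partial>lborel) \<longlonglongrightarrow> 0" for a
  proof -
    have [measurable]: "f \<in> borel_measurable borel" by (rule fm)
    have eq: "(\<integral>\<^sup>+ x. ennreal ((cmod (p m (x + c) - complex_of_real (f (x + c))))\<^sup>2) * indicator {a..a + L} x \<partial>lborel)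
        = (\<integral>\<^sup>+ y. ennreal ((cmod (p m y - complex_of_real (f y)))\<^sup>2) * indicator {(a + c)..(a + c) + L} y \<partial>lborel)" for m
    proof -
      have [measurable]: "p m \<in> borel_measurable borel" by (rule trig_poly_meas[OF tp])
      have "(\<lambda>y. ennreal ((cmod (p m y - complex_of_real (f y)))\<^sup>2)) \<in> borel_measurable borel" by measurable
      from nn_translate[OF this, of c a "a + L"] show ?thesis by (simp add: add_ac)
    qed
    have "(\<lambda>m. \<integral>\<^sup>+ y. ennreal ((cmod (p m y - complex_of_real (f y)))\<^sup>2) * indicator {(a + c)..(a + c) + L} y \<partial>lborel) \<longlonglongrightarrow> 0"
      using h by (simp add: h2approx_def)
    thus ?thesis unfolding eq .
  qed
qed

lemma H2per_shift:
  assumes H: "H2per L f" and L: "L > 0"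
  shows "H2per L (\<lambda>x. f (x + c))"
proof -
  obtain p where h: "h2approx L f p" and fm: "f \<in> borel_measurable borel" using H unfolding H2per_def by blast
  have [measurable]: "f \<in> borel_measurable borel" by (rule fm)
  have "(\<lambda>x. f (x + c)) \<in> borel_measurable borel" by measurable
  thus ?thesis unfolding H2per_def using h2approx_shift[OF h fm L] by blast
qed

lemma deriv_shift_fun:
  fixes g :: "real \<Rightarrow> real"
  assumes d: "\<And>x. g differentiable (at x)"
  shows "deriv (\<lambda>x. g (x - c)) = (\<lambda>x. deriv g (x - c))"
proof
  fix x
  have "(g has_real_derivative deriv g (x + - c)) (at (x + - c))"
    using d by (simp add: DERIV_deriv_iff_real_differentiable real_differentiable_def differentiable_def
        has_field_derivative_def)
       (metis DERIV_deriv_iff_real_differentiable d real_differentiable_def differentiable_def has_field_derivative_def)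
  hence "((\<lambda>x. g (x + - c)) has_real_derivative deriv g (x + - c)) (at x)" by (simp only: DERIV_shift)
  hence "deriv (\<lambda>x. g (x + - c)) x = deriv g (x + - c)" by (rule DERIV_imp_deriv)
  thus "deriv (\<lambda>x. g (x - c)) x = deriv g (x - c)" by simp
qed

lemma differentiable_shift:
  fixes g :: "real \<Rightarrow> real"
  assumes d: "g differentiable (at (x - c))"
  shows "(\<lambda>x. g (x - c)) differentiable (at x)"
proof -
  have "(\<lambda>x. x - c) differentiable (at x)" by (intro derivative_intros)
  from differentiable_chain_at[OF this, of g] d show ?thesis by (simp add: o_def)
qed

lemma deriv_pow_shift:
  fixes \<phi> :: "real \<Rightarrow> real"
  assumes sm: "\<forall>k x. ((deriv ^^ k) \<phi>) differentiable (at x)"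
  shows "(deriv ^^ k) (\<lambda>x. \<phi> (x - c)) = (\<lambda>x. (deriv ^^ k) \<phi> (x - c))"
proof (induction k)
  case 0 then show ?case by simp
next
  case (Suc k)
  have "(deriv ^^ Suc k) (\<lambda>x. \<phi> (x - c)) = deriv (\<lambda>x. (deriv ^^ k) \<phi> (x - c))" using Suc by simp
  also have "\<dots> = (\<lambda>x. deriv ((deriv ^^ k) \<phi>) (x - c))" by (rule deriv_shift_fun) (use sm in blast)
  finally show ?case by simp
qed

lemma smooth_shift:
  fixes \<phi> :: "real \<Rightarrow> real"
  assumes sm: "\<forall>k x. ((deriv ^^ k) \<phi>) differentiable (at x)"
  shows "\<forall>k x. ((deriv ^^ k) (\<lambda>x. \<phi> (x - c))) differentiable (at x)"
  unfolding deriv_pow_shift[OF sm] using sm by (auto intro: differentiable_shift)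

lemma smooth_cont:
  fixes \<phi> :: "real \<Rightarrow> real"
  assumes sm: "\<forall>k x. ((deriv ^^ k) \<phi>) differentiable (at x)"
  shows "continuous_on UNIV ((deriv ^^ k) \<phi>)"
  using sm by (intro continuous_at_imp_continuous_on ballI differentiable_imp_continuous_within) auto

lemma deriv_periodic:
  fixes g :: "real \<Rightarrow> real"
  assumes d: "\<And>x. g differentiable (at x)" and p: "\<And>x. g (x + L) = g x"
  shows "deriv g (x + L) = deriv g x"
proof -
  have "(g has_real_derivative deriv g (x + L)) (at (x + L))"
    using d by (metis DERIV_deriv_iff_real_differentiable real_differentiable_def differentiable_def has_field_derivative_def)
  hence "((\<lambda>x. g (x + L)) has_real_derivative deriv g (x + L)) (at x)" by (simp only: DERIV_shift)
  hence "(g has_real_derivative deriv g (x + L)) (at x)" using p by simp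
  thus ?thesis by (rule DERIV_imp_deriv[symmetric])
qed

lemma deriv_pow_periodic:
  fixes \<phi> :: "real \<Rightarrow> real"
  assumes sm: "\<forall>k x. ((deriv ^^ k) \<phi>) differentiable (at x)" and p: "\<forall>x. \<phi> (x + L) = \<phi> x"
  shows "(deriv ^^ k) \<phi> (x + L) = (deriv ^^ k) \<phi> x"
proof (induction k arbitrary: x)
  case 0 then show ?case using p by simp
next
  case (Suc k)
  show ?case using deriv_periodic[of "(deriv ^^ k) \<phi>" L x] sm Suc by simp
qed

lemma cont_bounded_window:
  fixes g :: "real \<Rightarrow> real"
  assumes "continuous_on UNIV g"
  shows "\<exists>C. \<forall>x\<in>{a..b}. \<bar>g x\<bar> \<le> C"
proof -
  have "compact (g ` {a..b})" by (rule compact_continuous_image[OF continuous_on_subset[OF assms] compact_Icc]) auto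
  hence "bounded (g ` {a..b})" by (rule compact_imp_bounded)
  then obtain C where "\<forall>y\<in>g ` {a..b}. norm y \<le> C" unfolding bounded_iff by blast
  thus ?thesis by auto
qed

lemma real_int_sq_bounded_w:
  fixes f h :: "real \<Rightarrow> real"
  assumes f: "f \<in> borel_measurable borel" and f2: "set_integrable lborel {a..b} (\<lambda>x. (f x)\<^sup>2)"
    and h: "continuous_on UNIV h"
  shows "set_integrable lborel {a..b} (\<lambda>x. (f x)\<^sup>2 * h x)"
proof -
  obtain C where C: "\<forall>x\<in>{a..b}. \<bar>h x\<bar> \<le> C" using cont_bounded_window[OF h] by blast
  have hm: "h \<in> borel_measurable borel" by (rule borel_measurable_continuous_onI[OF h])
  show ?thesis
  proof (rule set_integrable_bound[where f="\<lambda>x. C * (f x)\<^sup>2"])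
    show "set_integrable lborel {a..b} (\<lambda>x. C * (f x)\<^sup>2)" using f2 by (rule set_integrable_mult_right)
    show "set_borel_measurable lborel {a..b} (\<lambda>x. (f x)\<^sup>2 * h x)" using f hm by (intro sbm) auto
    show "AE x\<in>{a..b} in lborel. norm ((f x)\<^sup>2 * h x) \<le> norm (C * (f x)\<^sup>2)"
    proof (rule AE_I2, rule impI)
      fix x assume x: "x \<in> {a..b}"
      have "\<bar>(f x)\<^sup>2 * h x\<bar> = (f x)\<^sup>2 * \<bar>h x\<bar>" by (simp add: abs_mult)
      also have "\<dots> \<le> (f x)\<^sup>2 * C" using C x by (intro mult_left_mono) auto
      finally show "norm ((f x)\<^sup>2 * h x) \<le> norm (C * (f x)\<^sup>2)" by (simp add: mult.commute)
    qed
  qed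
qed

lemma real_int_bounded_w:
  fixes f h :: "real \<Rightarrow> real"
  assumes f: "f \<in> borel_measurable borel" and f2: "set_integrable lborel {a..b} (\<lambda>x. (f x)\<^sup>2)"
    and h: "continuous_on UNIV h"
  shows "set_integrable lborel {a..b} (\<lambda>x. f x * h x)"
proof -
  obtain C where C: "\<forall>x\<in>{a..b}. \<bar>h x\<bar> \<le> C" using cont_bounded_window[OF h] by blast
  have hm: "h \<in> borel_measurable borel" by (rule borel_measurable_continuous_onI[OF h])
  show ?thesis
  proof (rule set_integrable_bound[where f="\<lambda>x. C * (1 + (f x)\<^sup>2)"])
    have one: "set_integrable lborel {a..b} (\<lambda>x. 1::real)" by (rule borel_integrable_atLeastAtMost') (rule continuous_on_const)
    show "set_integrable lborel {a..b} (\<lambda>x. C * (1 + (f x)\<^sup>2))"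
      using f2 one by (intro set_integrable_mult_right set_integral_add)
    show "set_borel_measurable lborel {a..b} (\<lambda>x. f x * h x)" using f hm by (intro sbm) auto
    show "AE x\<in>{a..b} in lborel. norm (f x * h x) \<le> norm (C * (1 + (f x)\<^sup>2))"
    proof (rule AE_I2, rule impI)
      fix x assume x: "x \<in> {a..b}"
      have C0: "0 \<le> C" using C x by force
      have fx: "\<bar>f x\<bar> \<le> 1 + (f x)\<^sup>2"
      proof (cases "\<bar>f x\<bar> \<le> 1")
        case True then show ?thesis using zero_le_power2[of "f x"] by linarith
      next
        case False
        hence "\<bar>f x\<bar> * 1 \<le> \<bar>f x\<bar> * \<bar>f x\<bar>" by (intro mult_left_mono) auto
        also have "\<bar>f x\<bar> * \<bar>f x\<bar> = (f x)\<^sup>2" by (simp add: power2_eq_square abs_mult_self_eq)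
        finally show ?thesis by simp
      qed
      have "\<bar>f x * h x\<bar> = \<bar>f x\<bar> * \<bar>h x\<bar>" by (simp add: abs_mult)
      also have "\<dots> \<le> (1 + (f x)\<^sup>2) * C" using C x by (intro mult_mono fx) auto
      finally show "norm (f x * h x) \<le> norm (C * (1 + (f x)\<^sup>2))" using C0 by (simp add: mult.commute)
    qed
  qed
qed

lemma shift_period_int:
  fixes H :: "real \<Rightarrow> 'a::{banach, second_countable_topology}"
  assumes L: "L > 0" and per: "AE x in lborel. H (x + L) = H x"
    and Hm: "H \<in> borel_measurable borel"
    and int: "\<And>a. set_integrable lborel {a..a+L} H" and c: "\<bar>c\<bar> \<le> L"
  shows "(LINT x:{0..L}|lborel. H (x + c)) = (LINT x:{0..L}|lborel. H x)"
proof -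
  have "(LINT x:{0..L}|lborel. H (x + c)) = (LINT x:{0+c..L+c}|lborel. H x)" by (rule int_translate)
  also have "\<dots> = (LINT x:{c..c+L}|lborel. H x)" by (simp add: add.commute)
  also have "\<dots> = (LINT x:{0..L}|lborel. H x)" by (rule per_shift[OF L per Hm int c])
  finally show ?thesis .
qed

lemma sol_window:
  assumes sol: "kdv_solution L \<delta> u"
  shows "(\<lambda>x. u x t) \<in> borel_measurable borel" and "set_integrable lborel {a..a+L} (\<lambda>x. (u x t)\<^sup>2)"
proof -
  have H: "H2per L (\<lambda>x. u x t)" using sol by (simp add: kdv_solution_def)
  have "sqi {a..a+L} (\<lambda>x. complex_of_real (u x t))" by (rule h2per_sqi[OF H])
  thus "(\<lambda>x. u x t) \<in> borel_measurable borel" and "set_integrable lborel {a..a+L} (\<lambda>x. (u x t)\<^sup>2)"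
    by (simp_all add: sqi_of_real)
qed

lemma sol_periodic:
  assumes sol: "kdv_solution L \<delta> u" and L: "L > 0"
  shows "AE x in lborel. u (x + L) t = u x t"
proof -
  have H: "H2per L (\<lambda>x. u x t)" using sol by (simp add: kdv_solution_def)
  show ?thesis using h2per_periodic[OF L H] by simp
qed

lemma kdv_translate:
  assumes sol: "kdv_solution L \<delta> u" and L: "L > 0" and c: "\<bar>c\<bar> \<le> L"
  shows "kdv_solution L \<delta> (\<lambda>x t. u (x + c) t)"
proof -
  have P1: "\<forall>t. H2per L (\<lambda>x. u (x + c) t)"
    using H2per_shift[of L "\<lambda>x. u x t" c for t] sol L by (simp add: kdv_solution_def)
  have P2: "\<forall>T::real. \<exists>B::real. \<forall>t\<in>{-T..T}. \<exists>p. h2approx L (\<lambda>x. u (x + c) t) p \<and> (\<forall>m. h2norm L (p m) \<le> B)"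
  proof
  fix T :: real
  obtain B where B: "\<forall>t\<in>{-T..T}. \<exists>p. h2approx L (\<lambda>x. u x t) p \<and> (\<forall>m. h2norm L (p m) \<le> B)"
    using sol unfolding kdv_solution_def by blast
  show "\<exists>B. \<forall>t\<in>{-T..T}. \<exists>p. h2approx L (\<lambda>x. u (x + c) t) p \<and> (\<forall>m. h2norm L (p m) \<le> B)"
  proof (rule exI[of _ B], rule ballI)
    fix t assume t: "t \<in> {-T..T}"
    obtain p where h: "h2approx L (\<lambda>x. u x t) p" and pB: "\<forall>m. h2norm L (p m) \<le> B" using B t by blast
    have tp: "\<And>m. trig_poly L (p m)" using h by (simp add: h2approx_def)
    have m: "(\<lambda>x. u x t) \<in> borel_measurable borel" by (rule sol_window(1)[OF sol])
    have "h2approx L (\<lambda>x. u (x + c) t) (\<lambda>m x. p m (x + c))"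
      using h2approx_shift[OF h m L, of c] by simp
    moreover have "\<forall>m. h2norm L (\<lambda>x. p m (x + c)) \<le> B"
      using pB h2norm_shift[OF tp L] by simp
    ultimately show "\<exists>p. h2approx L (\<lambda>x. u (x + c) t) p \<and> (\<forall>m. h2norm L (p m) \<le> B)" by blast
  qed
  qed
  have P3: "((\<lambda>s. LINT x:{0..L}|lborel. u (x + c) s * \<phi> x) has_real_derivative
          (LINT x:{0..L}|lborel. (u (x + c) t)\<^sup>2 / 2 * deriv \<phi> x + \<delta>\<^sup>2 * u (x + c) t * (deriv ^^ 3) \<phi> x)) (at t)"
    if sm: "\<forall>k x. ((deriv ^^ k) \<phi>) differentiable (at x)" and per: "\<forall>x. \<phi> (x + L) = \<phi> x" for \<phi> :: "real \<Rightarrow> real" and t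
  proof -
  define \<psi> where "\<psi> = (\<lambda>x. \<phi> (x - c))"
  have sm\<psi>: "\<forall>k x. ((deriv ^^ k) \<psi>) differentiable (at x)" unfolding \<psi>_def by (rule smooth_shift[OF sm])
  have per\<psi>: "\<forall>x. \<psi> (x + L) = \<psi> x" unfolding \<psi>_def using per
    by (metis add.commute add_diff_eq)
  have dk: "(deriv ^^ k) \<psi> = (\<lambda>x. (deriv ^^ k) \<phi> (x - c))" for k unfolding \<psi>_def by (rule deriv_pow_shift[OF sm])
  have cont: "continuous_on UNIV ((deriv ^^ k) \<psi>)" for k by (rule smooth_cont[OF sm\<psi>])
  have perk: "(deriv ^^ k) \<psi> (x + L) = (deriv ^^ k) \<psi> x" for k x by (rule deriv_pow_periodic[OF sm\<psi> per\<psi>])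
  have W: "((\<lambda>s. LINT x:{0..L}|lborel. u x s * \<psi> x) has_real_derivative
               (LINT x:{0..L}|lborel. (u x t)\<^sup>2 / 2 * deriv \<psi> x + \<delta>\<^sup>2 * u x t * (deriv ^^ 3) \<psi> x)) (at t)"
    using sol sm\<psi> per\<psi> unfolding kdv_solution_def by blast
  have c0: "continuous_on UNIV \<psi>" using cont[of 0] by simp
  have c1: "continuous_on UNIV (deriv \<psi>)" using cont[of 1] by simp
  have c3: "continuous_on UNIV ((deriv ^^ 3) \<psi>)" by (rule cont)
  have [measurable]: "\<psi> \<in> borel_measurable borel" "deriv \<psi> \<in> borel_measurable borel" "(deriv ^^ 3) \<psi> \<in> borel_measurable borel"
    using c0 c1 c3 by (auto intro: borel_measurable_continuous_onI)
  have lhs: "(LINT x:{0..L}|lborel. u (x + c) s * \<phi> x) = (LINT x:{0..L}|lborel. u x s * \<psi> x)" for s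
  proof -
    have [measurable]: "(\<lambda>x. u x s) \<in> borel_measurable borel" by (rule sol_window(1)[OF sol])
    have "(LINT x:{0..L}|lborel. (\<lambda>y. u y s * \<psi> y) (x + c)) = (LINT x:{0..L}|lborel. (\<lambda>y. u y s * \<psi> y) x)"
    proof (rule shift_period_int[OF L _ _ _ c])
      show "AE x in lborel. u (x + L) s * \<psi> (x + L) = u x s * \<psi> x"
        using sol_periodic[OF sol L, of s] by (rule AE_mp) (auto intro!: AE_I2 simp: per\<psi>)
      show "(\<lambda>y. u y s * \<psi> y) \<in> borel_measurable borel" by measurable
      show "set_integrable lborel {a..a+L} (\<lambda>y. u y s * \<psi> y)" for a
        by (rule real_int_bounded_w[OF sol_window(1)[OF sol] sol_window(2)[OF sol] c0])
    qed
    thus ?thesis by (simp add: \<psi>_def)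
  qed
  have rhs: "(LINT x:{0..L}|lborel. (u (x + c) t)\<^sup>2 / 2 * deriv \<phi> x + \<delta>\<^sup>2 * u (x + c) t * (deriv ^^ 3) \<phi> x)
      = (LINT x:{0..L}|lborel. (u x t)\<^sup>2 / 2 * deriv \<psi> x + \<delta>\<^sup>2 * u x t * (deriv ^^ 3) \<psi> x)"
  proof -
    have [measurable]: "(\<lambda>x. u x t) \<in> borel_measurable borel" by (rule sol_window(1)[OF sol])
    let ?H = "\<lambda>y. (u y t)\<^sup>2 / 2 * deriv \<psi> y + \<delta>\<^sup>2 * u y t * (deriv ^^ 3) \<psi> y"
    have "(LINT x:{0..L}|lborel. ?H (x + c)) = (LINT x:{0..L}|lborel. ?H x)"
    proof (rule shift_period_int[OF L _ _ _ c])
      show "AE x in lborel. ?H (x + L) = ?H x"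
      proof -
        have p1: "deriv \<psi> (x + L) = deriv \<psi> x" for x using perk[of 1 x] by simp
        have p3: "(deriv ^^ 3) \<psi> (x + L) = (deriv ^^ 3) \<psi> x" for x by (rule perk)
        show ?thesis using sol_periodic[OF sol L, of t] by (rule AE_mp) (auto intro!: AE_I2 simp: p1 p3)
      qed
      show "?H \<in> borel_measurable borel" by measurable
      show "set_integrable lborel {a..a+L} ?H" for a
      proof -
        have i1: "set_integrable lborel {a..a+L} (\<lambda>y. (u y t)\<^sup>2 * deriv \<psi> y)"
          by (rule real_int_sq_bounded_w[OF sol_window(1)[OF sol] sol_window(2)[OF sol] c1])
        have i2: "set_integrable lborel {a..a+L} (\<lambda>y. u y t * (deriv ^^ 3) \<psi> y)"
          by (rule real_int_bounded_w[OF sol_window(1)[OF sol] sol_window(2)[OF sol] c3])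
        have "set_integrable lborel {a..a+L} (\<lambda>y. (1/2) * ((u y t)\<^sup>2 * deriv \<psi> y) + \<delta>\<^sup>2 * (u y t * (deriv ^^ 3) \<psi> y))"
          by (intro set_integral_add set_integrable_mult_right i1 i2)
        thus ?thesis by (simp add: algebra_simps)
      qed
    qed
    moreover have "deriv \<psi> (x + c) = deriv \<phi> x" "(deriv ^^ 3) \<psi> (x + c) = (deriv ^^ 3) \<phi> x" for x
      using dk[of 1] dk[of 3] by simp_all
    ultimately show ?thesis by simp
  qed
  show "((\<lambda>s. LINT x:{0..L}|lborel. u (x + c) s * \<phi> x) has_real_derivative
          (LINT x:{0..L}|lborel. (u (x + c) t)\<^sup>2 / 2 * deriv \<phi> x + \<delta>\<^sup>2 * u (x + c) t * (deriv ^^ 3) \<phi> x)) (at t)"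
    unfolding lhs rhs by (rule W)
  qed
  show ?thesis unfolding kdv_solution_def using P1 P2 P3 by blast
qed

lemma mean_conserve:
  assumes sol: "kdv_solution L \<delta> u" and L: "L > 0"
  shows "(LINT x:{0..L}|lborel. u x t) = (LINT x:{0..L}|lborel. u x 0)"
proof -
  have "\<forall>s. (Cc L u 0 has_real_derivative 0) (at s)"
    using deriv_Cc[OF sol L, of 0] by simp
  hence "Cc L u 0 t = Cc L u 0 0" by (rule DERIV_isconst_all)
  thus ?thesis by (simp add: Cc_def)
qed

lemma ee_ne_1:
  assumes L: "L > 0" and k: "k \<noteq> 0" and n: "n \<noteq> 0" and nk: "\<bar>n\<bar> < \<bar>k\<bar>"
  shows "ee L n (L / of_int k) \<noteq> 1"
proof
  assume "ee L n (L / of_int k) = 1"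
  hence "exp (\<i> * complex_of_real (freq L * of_int n * (L / of_int k))) = 1" by (simp add: ee_def)
  then obtain m :: int where m: "Im (\<i> * complex_of_real (freq L * of_int n * (L / of_int k))) = real_of_int (2 * m) * pi"
    unfolding exp_eq_1 by blast
  hence "2 * pi * of_int n / of_int k = 2 * of_int m * pi" using L by (simp add: freq_def)
  hence "real_of_int n = real_of_int m * of_int k" using k by (simp add: field_simps)
  hence nm: "n = m * k" by (metis of_int_eq_iff of_int_mult)
  show False
  proof (cases "m = 0")
    case True then show False using nm n by simp
  next
    case False
    hence "1 \<le> \<bar>m\<bar>" by linarith
    hence "1 * \<bar>k\<bar> \<le> \<bar>m\<bar> * \<bar>k\<bar>" by (intro mult_right_mono) auto
    hence "\<bar>k\<bar> \<le> \<bar>m\<bar> * \<bar>k\<bar>" by simp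
    thus False using nk nm by (simp add: abs_mult)
  qed
qed

lemma coeff_vanish:
  assumes sol: "kdv_solution L \<delta> u" and L: "L > 0" and k: "k \<noteq> 0"
    and perk: "AE x in lborel. u (x + L / of_int k) t = u x t"
    and n: "n \<noteq> 0" and nk: "\<bar>n\<bar> < \<bar>k\<bar>"
  shows "fourier_coeff L (\<lambda>x. u x t) n = 0"
proof -
  define c where "c = L / of_int k"
  have c: "\<bar>c\<bar> \<le> L"
  proof -
    have "1 \<le> \<bar>real_of_int k\<bar>" using k by linarith
    hence "L / \<bar>real_of_int k\<bar> \<le> L" using L by (simp add: divide_le_eq)
    thus ?thesis using L by (simp add: c_def abs_divide)
  qed
  define F where "F x = complex_of_real (u x t)" for x
  define H where "H y = F y * cnj (ee L n y)" for y
  have [measurable]: "(\<lambda>x. u x t) \<in> borel_measurable borel" by (rule sol_window(1)[OF sol])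
  have Fm[measurable]: "F \<in> borel_measurable borel" unfolding F_def by measurable
  have cee: "(\<lambda>y. cnj (ee L n y)) \<in> borel_measurable borel" using sqi_cnj_ee[of 0 1 L n] by (simp add: sqi_def)
  have Hm: "H \<in> borel_measurable borel" unfolding H_def using Fm cee by measurable
  let ?I = "LINT x:{0..L}|lborel. H x"
  have "?I = (LINT x:{0..L}|lborel. F (x + c) * cnj (ee L n x))"
  proof (rule set_lebesgue_integral_cong_AE)
    show "H \<in> borel_measurable lborel" using Hm by simp
    have "(\<lambda>x. F (x + c) * cnj (ee L n x)) \<in> borel_measurable borel" using Fm cee by measurable
    thus "(\<lambda>x. F (x + c) * cnj (ee L n x)) \<in> borel_measurable lborel" by simp
    show "AE x\<in>{0..L} in lborel. H x = F (x + c) * cnj (ee L n x)"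
      using perk by (rule AE_mp) (auto intro!: AE_I2 simp: H_def F_def c_def)
  qed simp
  also have "\<dots> = (LINT x:{0..L}|lborel. ee L n c * H (x + c))"
  proof -
    have "F (x + c) * cnj (ee L n x) = ee L n c * H (x + c)" for x
    proof -
      have "ee L n (x + c) = ee L n x * ee L n c" by (simp add: ee_def distrib_left exp_add[symmetric] algebra_simps)
      moreover have "ee L n c * cnj (ee L n c) = 1"
        using complex_norm_square[of "ee L n c"] by simp
      ultimately show ?thesis unfolding H_def
        by (simp add: algebra_simps)
    qed
    thus ?thesis by simp
  qed
  also have "\<dots> = ee L n c * (LINT x:{0..L}|lborel. H (x + c))" by (rule set_integral_mult_right)
  also have "(LINT x:{0..L}|lborel. H (x + c)) = ?I"
  proof (rule shift_period_int[OF L _ Hm _ c])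
    show "AE x in lborel. H (x + L) = H x"
      using sol_periodic[OF sol L, of t] by (rule AE_mp) (auto intro!: AE_I2 simp: H_def F_def ee_periodic[OF L])
    show "set_integrable lborel {a..a+L} H" for a
      unfolding H_def F_def
      by (rule set_integrable_prod[OF h2per_sqi sqi_cnj_ee]) (use sol in \<open>auto simp: kdv_solution_def\<close>)
  qed
  finally have "?I = ee L n c * ?I" .
  hence "(1 - ee L n c) * ?I = 0" by (simp add: algebra_simps)
  moreover have "1 - ee L n c \<noteq> 0" using ee_ne_1[OF L k n nk] by (simp add: c_def)
  ultimately have "?I = 0" by simp
  thus ?thesis unfolding fourier_coeff_cf cf_def H_def F_def by simp
qed

lemma real_prod_int:
  fixes f g :: "real \<Rightarrow> real"
  assumes f: "f \<in> borel_measurable borel" and g: "g \<in> borel_measurable borel"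
    and f2: "set_integrable lborel A (\<lambda>x. (f x)\<^sup>2)" and g2: "set_integrable lborel A (\<lambda>x. (g x)\<^sup>2)"
    and A: "A \<in> sets borel"
  shows "set_integrable lborel A (\<lambda>x. f x * g x)"
proof (rule set_integrable_bound[where f="\<lambda>x. (f x)\<^sup>2 + (g x)\<^sup>2"])
  show "set_integrable lborel A (\<lambda>x. (f x)\<^sup>2 + (g x)\<^sup>2)" using f2 g2 by (rule set_integral_add)
  show "set_borel_measurable lborel A (\<lambda>x. f x * g x)" using f g A by (intro sbm) auto
  show "AE x\<in>A in lborel. norm (f x * g x) \<le> norm ((f x)\<^sup>2 + (g x)\<^sup>2)"
  proof (rule AE_I2, rule impI)
    fix x
    have "2 * (\<bar>f x\<bar> * \<bar>g x\<bar>) \<le> \<bar>f x\<bar>\<^sup>2 + \<bar>g x\<bar>\<^sup>2" using sum_squares_bound[of "\<bar>f x\<bar>" "\<bar>g x\<bar>"] by (simp add: mult.assoc)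
    moreover have "0 \<le> \<bar>f x\<bar> * \<bar>g x\<bar>" by simp
    ultimately have "\<bar>f x\<bar> * \<bar>g x\<bar> \<le> \<bar>f x\<bar>\<^sup>2 + \<bar>g x\<bar>\<^sup>2" by linarith
    hence "\<bar>f x\<bar> * \<bar>g x\<bar> \<le> (f x)\<^sup>2 + (g x)\<^sup>2" by simp
    thus "norm (f x * g x) \<le> norm ((f x)\<^sup>2 + (g x)\<^sup>2)" by (simp add: abs_mult)
  qed
qed

lemma l2_lower:
  assumes sol1: "kdv_solution L \<delta> u1" and sol2: "kdv_solution L \<delta> u2"
    and AB: "(LINT x:{0..L}|lborel. (u1 x t)\<^sup>2) \<noteq> (LINT x:{0..L}|lborel. (u2 x t)\<^sup>2)"
  shows "((LINT x:{0..L}|lborel. (u1 x t)\<^sup>2) - (LINT x:{0..L}|lborel. (u2 x t)\<^sup>2))\<^sup>2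
           / (2 * ((LINT x:{0..L}|lborel. (u1 x t)\<^sup>2) + (LINT x:{0..L}|lborel. (u2 x t)\<^sup>2)))
         \<le> (LINT x:{0..L}|lborel. (u1 x t - u2 x t)\<^sup>2)"
proof -
  define A where "A = (LINT x:{0..L}|lborel. (u1 x t)\<^sup>2)"
  define B where "B = (LINT x:{0..L}|lborel. (u2 x t)\<^sup>2)"
  define P where "P = (LINT x:{0..L}|lborel. u1 x t * u2 x t)"
  have m1: "(\<lambda>x. u1 x t) \<in> borel_measurable borel" and q1: "set_integrable lborel {0..L} (\<lambda>x. (u1 x t)\<^sup>2)"
    using sol_sq[OF sol1] by auto
  have m2: "(\<lambda>x. u2 x t) \<in> borel_measurable borel" and q2: "set_integrable lborel {0..L} (\<lambda>x. (u2 x t)\<^sup>2)"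
    using sol_sq[OF sol2] by auto
  have ip: "set_integrable lborel {0..L} (\<lambda>x. u1 x t * u2 x t)" by (rule real_prod_int[OF m1 m2 q1 q2]) simp
  have A0: "0 \<le> A" unfolding A_def by (rule set_integral_nonneg') simp
  have B0: "0 \<le> B" unfolding B_def by (rule set_integral_nonneg') simp
  have X: "(LINT x:{0..L}|lborel. (u1 x t - u2 x t)\<^sup>2) = A - 2 * P + B"
  proof -
    have "(LINT x:{0..L}|lborel. (u1 x t - u2 x t)\<^sup>2) = (LINT x:{0..L}|lborel. ((u1 x t)\<^sup>2 + (-2) * (u1 x t * u2 x t)) + (u2 x t)\<^sup>2)"
      by (simp add: power2_diff algebra_simps)
    also have "\<dots> = A - 2 * P + B"
      unfolding A_def B_def P_def using q1 q2 ip
      by (simp add: set_integral_add set_integrable_mult_right set_integral_mult_right)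
    finally show ?thesis .
  qed
  have Pb: "2 * P \<le> s * A + B / s" if s: "s > 0" for s
  proof -
    have "P \<le> (LINT x:{0..L}|lborel. (s * (u1 x t)\<^sup>2 + (u2 x t)\<^sup>2 / s) / 2)"
      unfolding P_def
    proof (rule set_integral_mono[OF ip])
      show "set_integrable lborel {0..L} (\<lambda>x. (s * (u1 x t)\<^sup>2 + (u2 x t)\<^sup>2 / s) / 2)"
        using q1 q2 by (intro set_integrable_divide set_integral_add set_integrable_mult_right)
      show "u1 x t * u2 x t \<le> (s * (u1 x t)\<^sup>2 + (u2 x t)\<^sup>2 / s) / 2" for x by (rule amgm[OF s])
    qed
    also have "\<dots> = (s * A + B / s) / 2"
      unfolding A_def B_def using q1 q2
      by (simp add: set_integral_add set_integrable_mult_right set_integral_mult_right set_integrable_divide set_integral_divide_zero)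
    finally show ?thesis by simp
  qed
  have Pb': "2 * P \<le> s * B + A / s" if s: "s > 0" for s
  proof -
    have "P \<le> (LINT x:{0..L}|lborel. (s * (u2 x t)\<^sup>2 + (u1 x t)\<^sup>2 / s) / 2)"
      unfolding P_def
    proof (rule set_integral_mono[OF ip])
      show "set_integrable lborel {0..L} (\<lambda>x. (s * (u2 x t)\<^sup>2 + (u1 x t)\<^sup>2 / s) / 2)"
        using q1 q2 by (intro set_integrable_divide set_integral_add set_integrable_mult_right)
      show "u1 x t * u2 x t \<le> (s * (u2 x t)\<^sup>2 + (u1 x t)\<^sup>2 / s) / 2" for x
        using amgm[OF s, of "u2 x t" "u1 x t"] by (simp add: mult.commute)
    qed
    also have "\<dots> = (s * B + A / s) / 2"
      unfolding A_def B_def using q1 q2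
      by (simp add: set_integral_add set_integrable_mult_right set_integral_mult_right set_integrable_divide set_integral_divide_zero)
    finally show ?thesis by simp
  qed
  have AB': "A \<noteq> B" using AB by (simp add: A_def B_def)
  have key: "(A - B)\<^sup>2 / (2 * (A + B)) \<le> A - 2 * P + B"
  proof (cases "B < A")
    case True
    define s where "s = (A + B) / (2 * A)"
    have Apos: "A > 0" using True B0 by linarith
    have s: "s > 0" unfolding s_def using Apos B0 by simp
    have AB0: "A + B \<noteq> 0" using Apos B0 by linarith
    have "(A - B)\<^sup>2 / (2 * (A + B)) = A - (s * A + B / s) + B"
    proof -
      have e1: "s * A = (A + B) / 2" unfolding s_def using Apos by (simp add: field_simps)
      have e2: "B / s = 2 * A * B / (A + B)" unfolding s_def using Apos AB0 by (simp add: field_simps)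
      have e3: "(A - B)\<^sup>2 / (2 * (A + B)) = A - ((A + B) / 2 + 2 * A * B / (A + B)) + B"
        using AB0 by (simp add: field_simps power2_eq_square)
      show ?thesis unfolding e1 e2 e3 ..
    qed
    also have "\<dots> \<le> A - 2 * P + B" using Pb[OF s] by linarith
    finally show ?thesis .
  next
    case False
    hence lt: "A < B" using AB' by linarith
    define s where "s = (A + B) / (2 * B)"
    have Bpos: "B > 0" using lt A0 by linarith
    have s: "s > 0" unfolding s_def using Bpos A0 by simp
    have AB0: "A + B \<noteq> 0" using Bpos A0 by linarith
    have "(A - B)\<^sup>2 / (2 * (A + B)) = A - (s * B + A / s) + B"
    proof -
      have e1: "s * B = (A + B) / 2" unfolding s_def using Bpos by (simp add: field_simps)
      have e2: "A / s = 2 * A * B / (A + B)" unfolding s_def using Bpos AB0 by (simp add: field_simps)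
      have e3: "(A - B)\<^sup>2 / (2 * (A + B)) = A - ((A + B) / 2 + 2 * A * B / (A + B)) + B"
        using AB0 by (simp add: field_simps power2_eq_square)
      show ?thesis unfolding e1 e2 e3 ..
    qed
    also have "\<dots> \<le> A - 2 * P + B" using Pb'[OF s] by linarith
    finally show ?thesis .
  qed
  thus ?thesis unfolding X A_def[symmetric] B_def[symmetric] .
qed

lemma fc0: "fourier_coeff L f 0 = complex_of_real (LINT x:{0..L}|lborel. f x) / complex_of_real L"
  unfolding fourier_coeff_def by (simp add: set_integral_complex_of_real)

lemma proj_zero:
  assumes "\<And>n. n \<in> {-int M..int M} \<Longrightarrow> fourier_coeff L f n = 0"
  shows "proj L M f = (\<lambda>x. 0)"
  unfolding proj_def[abs_def] using assms by (intro ext sum.neutral) auto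

lemma AE_shift_eq:
  fixes f g :: "real \<Rightarrow> real"
  assumes [measurable]: "f \<in> borel_measurable borel" "g \<in> borel_measurable borel"
    and ae: "AE x in lborel. f x = g x"
  shows "AE x in lborel. f (x + c) = g (x + c)"
proof -
  have "AE x in lborel. f (c + 1 * x) = g (c + 1 * x)"
    by (rule AE_borel_affine) (use ae in auto)
  thus ?thesis by (simp add: add.commute)
qed

lemma set_int_AE:
  fixes f g :: "real \<Rightarrow> real"
  assumes "f \<in> borel_measurable borel" "g \<in> borel_measurable borel" "AE x in lborel. f x = g x"
    and A: "A \<in> sets borel"
  shows "(LINT x:A|lborel. f x) = (LINT x:A|lborel. g x)"
  by (rule set_lebesgue_integral_cong_AE) (use assms in \<open>auto elim: AE_mp\<close>)

theorem proposition3p5: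
  fixes L \<delta> :: real and k :: int
    and uin1 uin2 :: "real \<Rightarrow> real" and u1 u2 :: "real \<Rightarrow> real \<Rightarrow> real"
  assumes L_pos: "L > 0"
    and k_nz: "k \<noteq> 0"
    and well_posed: "\<forall>v w. kdv_solution L \<delta> v \<and> kdv_solution L \<delta> w \<and> (AE x in lborel. v x 0 = w x 0)
                        \<longrightarrow> (\<forall>t. AE x in lborel. v x t = w x t)"
    and H2_1: "H2per L uin1" and H2_2: "H2per L uin2"
    and mean_1: "(LINT x:{0..L}|lborel. uin1 x) = 0"
    and mean_2: "(LINT x:{0..L}|lborel. uin2 x) = 0"
    and per_1: "AE x in lborel. uin1 (x + L / of_int k) = uin1 x"
    and per_2: "AE x in lborel. uin2 (x + L / of_int k) = uin2 x"
    and norms: "l2norm L uin1 \<noteq> l2norm L uin2"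
    and sol_1: "kdv_solution L \<delta> u1" and init_1: "AE x in lborel. u1 x 0 = uin1 x"
    and sol_2: "kdv_solution L \<delta> u2" and init_2: "AE x in lborel. u2 x 0 = uin2 x"
  shows "(\<forall>t. AE x in lborel. u1 (x + L / of_int k) t = u1 x t) \<and>
         (\<forall>t. AE x in lborel. u2 (x + L / of_int k) t = u2 x t) \<and>
         (\<forall>M::nat. 0 < M \<and> int M < \<bar>k\<bar> \<longrightarrow>
             (\<forall>t. proj L M (\<lambda>x. u1 x t) = proj L M (\<lambda>x. u2 x t))) \<and>
         Limsup at_top (\<lambda>t. ereal (l2norm L (\<lambda>x. u1 x t - u2 x t))) > 0"
proof -
  define c where "c = L / of_int k"
  have c: "\<bar>c\<bar> \<le> L"
  proof -
    have "1 \<le> \<bar>real_of_int k\<bar>" using k_nz by linarith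
    hence "L / \<bar>real_of_int k\<bar> \<le> L" using L_pos by (simp add: divide_le_eq)
    thus ?thesis using L_pos by (simp add: c_def abs_divide)
  qed
  have trans: "\<forall>t. AE x in lborel. u (x + L / of_int k) t = u x t"
    if sol: "kdv_solution L \<delta> u" and init: "AE x in lborel. u x 0 = uin x"
      and per: "AE x in lborel. uin (x + L / of_int k) = uin x" and H: "H2per L uin" for u uin
  proof -
    define v where "v = (\<lambda>x t. u (x + c) t)"
    have vsol: "kdv_solution L \<delta> v" unfolding v_def by (rule kdv_translate[OF sol L_pos c])
    have um: "(\<lambda>x. u x 0) \<in> borel_measurable borel" by (rule sol_window(1)[OF sol])
    have uinm: "uin \<in> borel_measurable borel" using H by (simp add: H2per_def)
    have a1: "AE x in lborel. u (x + c) 0 = uin (x + c)" by (rule AE_shift_eq[OF um uinm init])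
    have "AE x in lborel. v x 0 = u x 0"
      using a1 per init unfolding v_def c_def by eventually_elim simp
    hence "\<forall>t. AE x in lborel. v x t = u x t" using well_posed vsol sol by blast
    thus ?thesis unfolding v_def c_def by simp
  qed
  have i1: "\<forall>t. AE x in lborel. u1 (x + L / of_int k) t = u1 x t" by (rule trans[OF sol_1 init_1 per_1 H2_1])
  have i2: "\<forall>t. AE x in lborel. u2 (x + L / of_int k) t = u2 x t" by (rule trans[OF sol_2 init_2 per_2 H2_2])
  have coeffs: "fourier_coeff L (\<lambda>x. u x t) n = 0"
    if sol: "kdv_solution L \<delta> u" and init: "AE x in lborel. u x 0 = uin x" and H: "H2per L uin"
      and mean: "(LINT x:{0..L}|lborel. uin x) = 0"
      and ii: "\<forall>t. AE x in lborel. u (x + L / of_int k) t = u x t"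
      and n: "\<bar>n\<bar> < \<bar>k\<bar>" for u uin t n
  proof (cases "n = 0")
    case True
    have um: "(\<lambda>x. u x 0) \<in> borel_measurable borel" by (rule sol_window(1)[OF sol])
    have uinm: "uin \<in> borel_measurable borel" using H by (simp add: H2per_def)
    have "(LINT x:{0..L}|lborel. u x t) = (LINT x:{0..L}|lborel. u x 0)" by (rule mean_conserve[OF sol L_pos])
    also have "\<dots> = (LINT x:{0..L}|lborel. uin x)" by (rule set_int_AE[OF um uinm init]) simp
    finally show ?thesis using True mean by (simp add: fc0)
  next
    case False
    show ?thesis by (rule coeff_vanish[OF sol L_pos k_nz ii[rule_format] False n])
  qed
  have ii: "\<forall>M::nat. 0 < M \<and> int M < \<bar>k\<bar> \<longrightarrow> (\<forall>t. proj L M (\<lambda>x. u1 x t) = proj L M (\<lambda>x. u2 x t))"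
  proof (intro allI impI)
    fix M :: nat and t assume M: "0 < M \<and> int M < \<bar>k\<bar>"
    have "proj L M (\<lambda>x. u1 x t) = (\<lambda>x. 0)"
      by (rule proj_zero, rule coeffs[OF sol_1 init_1 H2_1 mean_1 i1]) (use M in auto)
    moreover have "proj L M (\<lambda>x. u2 x t) = (\<lambda>x. 0)"
      by (rule proj_zero, rule coeffs[OF sol_2 init_2 H2_2 mean_2 i2]) (use M in auto)
    ultimately show "proj L M (\<lambda>x. u1 x t) = proj L M (\<lambda>x. u2 x t)" by simp
  qed
  have sqc: "(LINT x:{0..L}|lborel. (u x t)\<^sup>2) = (LINT x:{0..L}|lborel. (uin x)\<^sup>2)"
    if sol: "kdv_solution L \<delta> u" and init: "AE x in lborel. u x 0 = uin x" and H: "H2per L uin" for u uin t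
  proof -
    have [measurable]: "(\<lambda>x. u x 0) \<in> borel_measurable borel" by (rule sol_window(1)[OF sol])
    have [measurable]: "uin \<in> borel_measurable borel" using H by (simp add: H2per_def)
    have "(LINT x:{0..L}|lborel. (u x t)\<^sup>2) = (LINT x:{0..L}|lborel. (u x 0)\<^sup>2)" by (rule conserve[OF sol L_pos])
    also have "\<dots> = (LINT x:{0..L}|lborel. (uin x)\<^sup>2)"
    proof (rule set_int_AE)
      show "(\<lambda>x. (u x 0)\<^sup>2) \<in> borel_measurable borel" by measurable
      show "(\<lambda>x. (uin x)\<^sup>2) \<in> borel_measurable borel" by measurable
      show "AE x in lborel. (u x 0)\<^sup>2 = (uin x)\<^sup>2" using init by (rule AE_mp) (auto intro!: AE_I2)
    qed simp
    finally show ?thesis .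
  qed
  define A1 where "A1 = (LINT x:{0..L}|lborel. (uin1 x)\<^sup>2)"
  define A2 where "A2 = (LINT x:{0..L}|lborel. (uin2 x)\<^sup>2)"
  have A10: "0 \<le> A1" unfolding A1_def by (rule set_integral_nonneg') simp
  have A20: "0 \<le> A2" unfolding A2_def by (rule set_integral_nonneg') simp
  have A12: "A1 \<noteq> A2"
  proof
    assume "A1 = A2"
    hence "l2norm L uin1 = l2norm L uin2" by (simp add: l2norm_def A1_def A2_def)
    thus False using norms by simp
  qed
  define \<gamma> where "\<gamma> = (A1 - A2)\<^sup>2 / (2 * (A1 + A2))"
  have \<gamma>: "\<gamma> > 0" unfolding \<gamma>_def using A10 A20 A12
    by (intro divide_pos_pos) (auto simp: add_nonneg_pos)
  have low: "sqrt \<gamma> \<le> l2norm L (\<lambda>x. u1 x t - u2 x t)" for t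
  proof -
    have e1: "(LINT x:{0..L}|lborel. (u1 x t)\<^sup>2) = A1" unfolding A1_def by (rule sqc[OF sol_1 init_1 H2_1])
    have e2: "(LINT x:{0..L}|lborel. (u2 x t)\<^sup>2) = A2" unfolding A2_def by (rule sqc[OF sol_2 init_2 H2_2])
    have "\<gamma> \<le> (LINT x:{0..L}|lborel. (u1 x t - u2 x t)\<^sup>2)"
      using l2_lower[OF sol_1 sol_2, of t] A12 unfolding e1 e2 \<gamma>_def by simp
    thus ?thesis unfolding l2norm_def by simp
  qed
  have le: "ereal (sqrt \<gamma>) \<le> Limsup at_top (\<lambda>t. ereal (l2norm L (\<lambda>x. u1 x t - u2 x t)))"
    by (rule le_Limsup) (auto intro: always_eventually low)
  have g0: "0 < ereal (sqrt \<gamma>)" using \<gamma> by simp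
  have iii: "Limsup at_top (\<lambda>t. ereal (l2norm L (\<lambda>x. u1 x t - u2 x t))) > 0"
    using less_le_trans[OF g0 le] .
  show ?thesis using i1 i2 ii iii by blast
qed

end
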